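(* For $0<a<1$ let $T_a:[0,1]\to[0,1]$ be $T_a(x)=x/a$ for $0\le x\le a$ and $T_a(x)=(1-x)/(1-a)$ for $a<x\le1$. If $a_1,\dots,a_k\in(0,1)$ satisfy $a_i\ne a_j$ and $a_i\ne1-a_j$ for all $i\ne j$, then $T_{a_1},\dots,T_{a_k}$ are jointly mixing with respect to Lebesgue measure $\lambda$: for all Borel sets $A_0,A_1,\dots,A_k\subset[0,1]$, $\lim_{n\to\infty}\lambda(A_0\cap T_{a_1}^{-n}A_1\cap\cdots\cap T_{a_k}^{-n}A_k)=\prod_{i=0}^k\lambda(A_i)$.
   Context: Each $T_a$ preserves Lebesgue measure $\lambda$ on $[0,1]$. *)

theory Defs
  imports "HOL-Analysis.Analysis"
begin

definition T :: "real \<Rightarrow> real \<Rightarrow> real" where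
  "T a x = (if x \<le> a then x / a else (1 - x) / (1 - a))"

definition Tpre :: "real \<Rightarrow> nat \<Rightarrow> real set \<Rightarrow> real set" where
  "Tpre a n A = {x \<in> {0..1}. (T a ^^ n) x \<in> A}"

end

theory Submission
  imports Defs
begin

definition psi :: "real \<Rightarrow> bool \<Rightarrow> real \<Rightarrow> real" where
  "psi a s y = (if s then a * y else 1 - (1 - a) * y)"

fun Psi :: "real \<Rightarrow> bool list \<Rightarrow> real \<Rightarrow> real" where
  "Psi a [] = id"
| "Psi a (s # w) = psi a s \<circ> Psi a w"

definition cf :: "real \<Rightarrow> bool \<Rightarrow> real" where
  "cf a s = (if s then a else 1 - a)"

fun wt :: "real \<Rightarrow> bool list \<Rightarrow> real" where
  "wt a [] = 1"
| "wt a (s # w) = cf a s * wt a w"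

definition W :: "nat \<Rightarrow> bool list set" where
  "W n = {w. length w = n}"

lemma finite_W[simp]: "finite (W n)"
  unfolding W_def using finite_lists_length_eq[of "UNIV :: bool set" n] by simp

lemma W_Suc: "W (Suc n) = Cons True ` W n \<union> Cons False ` W n"
  unfolding W_def by (auto simp: length_Suc_conv image_iff)

lemma sum_W_Suc: "(\<Sum>w\<in>W (Suc n). f w) = (\<Sum>w\<in>W n. f (True # w)) + (\<Sum>w\<in>W n. f (False # w))"
proof -
  have "(\<Sum>w\<in>W (Suc n). f w) = (\<Sum>w\<in>Cons True ` W n. f w) + (\<Sum>w\<in>Cons False ` W n. f w)"
    unfolding W_Suc by (rule sum.union_disjoint) auto
  also have "\<dots> = (\<Sum>w\<in>W n. f (True # w)) + (\<Sum>w\<in>W n. f (False # w))"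
    by (simp add: sum.reindex)
  finally show ?thesis .
qed

lemma W_0: "W 0 = {[]}" unfolding W_def by auto

lemma wt_pos: "0 < a \<Longrightarrow> a < 1 \<Longrightarrow> 0 < wt a w"
  by (induction w) (auto simp: cf_def)

lemma sum_wt: "0 < a \<Longrightarrow> a < 1 \<Longrightarrow> (\<Sum>w\<in>W n. wt a w) = 1"
proof (induction n)
  case 0 then show ?case by (simp add: W_0)
next
  case (Suc n)
  have "(\<Sum>w\<in>W (Suc n). wt a w) = a * (\<Sum>w\<in>W n. wt a w) + (1-a) * (\<Sum>w\<in>W n. wt a w)"
    by (simp add: sum_W_Suc cf_def sum_distrib_left)
  then show ?case using Suc by simp
qed

lemma psi_range: "0 < a \<Longrightarrow> a < 1 \<Longrightarrow> y \<in> {0..1} \<Longrightarrow> psi a s y \<in> {0..1}"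
proof -
  assume h: "0 < a" "a < 1" "y \<in> {0..1}"
  have "0 \<le> a * y" "a * y \<le> 1" "0 \<le> (1-a) * y" "(1-a) * y \<le> 1"
    using h by (simp_all add: mult_le_one)
  then show ?thesis by (simp add: psi_def)
qed

lemma Psi_range: "0 < a \<Longrightarrow> a < 1 \<Longrightarrow> y \<in> {0..1} \<Longrightarrow> Psi a w y \<in> {0..1}"
proof (induction w arbitrary: y)
  case Nil then show ?case by simp
next
  case (Cons s w)
  then have "Psi a w y \<in> {0..1}" by blast
  then show ?case using psi_range[OF Cons.prems(1,2)] by simp
qed

lemma T_psi: "0 < a \<Longrightarrow> a < 1 \<Longrightarrow> y \<in> {0..1} \<Longrightarrow> T a (psi a s y) = y"
proof -
  assume h: "0 < a" "a < 1" "y \<in> {0..1}"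
  show ?thesis
  proof (cases s)
    case True
    have "a * y \<le> a" using h by (simp add: mult_left_le)
    then show ?thesis using True h by (simp add: psi_def T_def)
  next
    case False
    show ?thesis
    proof (cases "1 - (1 - a) * y \<le> a")
      case True
      then have "(1-a) * 1 \<le> (1-a) * y" by (simp add: algebra_simps)
      then have "y = 1" using h by auto
      then show ?thesis using False h by (simp add: psi_def T_def)
    next
      case True2: False
      then show ?thesis using False h by (simp add: psi_def T_def)
    qed
  qed
qed

lemma Tn_Psi: "0 < a \<Longrightarrow> a < 1 \<Longrightarrow> y \<in> {0..1} \<Longrightarrow> (T a ^^ length w) (Psi a w y) = y"
proof (induction w arbitrary: y)
  case Nil then show ?case by simp
next
  case (Cons s w)
  have "(T a ^^ length (s # w)) (Psi a (s # w) y) = (T a ^^ length w) (T a (psi a s (Psi a w y)))"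
    by (simp only: length_Cons funpow_Suc_right comp_def Psi.simps)
  also have "\<dots> = (T a ^^ length w) (Psi a w y)"
    using Cons.prems Psi_range[of a y w] T_psi[of a "Psi a w y" s] by simp
  finally show ?case using Cons by simp
qed

lemma Psi_affine: "\<exists>c s. (\<forall>y. Psi a w y = c + s * y) \<and> \<bar>s\<bar> = wt a w" if "0 < a" "a < 1"
proof (induction w)
  case Nil then show ?case by (rule exI[of _ 0], rule exI[of _ 1]) simp
next
  case (Cons b w)
  then obtain c s where cs: "\<forall>y. Psi a w y = c + s * y" "\<bar>s\<bar> = wt a w" by blast
  show ?case
  proof (cases b)
    case True
    have "\<forall>y. Psi a (b # w) y = a*c + (a * s) * y" using True cs by (simp add: psi_def algebra_simps)
    moreover have "\<bar>a * s\<bar> = wt a (b # w)" using True cs that by (simp add: cf_def abs_mult)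
    ultimately show ?thesis by blast
  next
    case False
    have "\<forall>y. Psi a (b # w) y = (1 - (1-a)*c) + ((a-1) * s) * y" using False cs by (simp add: psi_def algebra_simps)
    moreover have "\<bar>(a-1) * s\<bar> = wt a (b # w)" using False cs that by (simp add: cf_def abs_mult)
    ultimately show ?thesis by blast
  qed
qed

lemma T_measurable[measurable]: "T a \<in> borel_measurable borel"
  unfolding T_def by measurable

lemma Tn_measurable[measurable]: "(T a ^^ n) \<in> borel_measurable borel"
  by (induction n) (auto simp: funpow_Suc_right intro: measurable_compose)

lemma Psi_measurable[measurable]: "0 < a \<Longrightarrow> a < 1 \<Longrightarrow> Psi a w \<in> borel_measurable borel"
proof -
  assume "0 < a" "a < 1"
  then obtain c s where "\<forall>y. Psi a w y = c + s * y" using Psi_affine by blast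
  then have "Psi a w = (\<lambda>y. c + s * y)" by auto
  then show ?thesis by simp
qed

definition J :: "(real \<Rightarrow> real) \<Rightarrow> real" where
  "J f = (\<integral>x. indicator {0..1} x * f x \<partial>lborel)"

definition bm :: "(real \<Rightarrow> real) \<Rightarrow> bool" where
  "bm f \<longleftrightarrow> f \<in> borel_measurable borel \<and> (\<exists>B. \<forall>x. \<bar>f x\<bar> \<le> B)"

lemma integrable_ind:
  fixes f :: "real \<Rightarrow> real" and B :: real
  assumes "f \<in> borel_measurable borel" "\<And>x. \<bar>f x\<bar> \<le> B" "S \<in> sets borel" "emeasure lborel S < \<infinity>"
  shows "integrable lborel (\<lambda>x. indicator S x * f x)"
proof (rule integrableI_bounded_set[where A=S and B=B])
  show "S \<in> sets lborel" using assms by simp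
  show "emeasure lborel S < \<infinity>" by fact
  show "(\<lambda>x. indicator S x * f x) \<in> borel_measurable lborel" using assms by simp
  show "AE x in lborel. x \<in> S \<longrightarrow> norm (indicator S x * f x) \<le> B" using assms by (auto simp: indicator_def)
  show "AE x in lborel. x \<notin> S \<longrightarrow> indicator S x * f x = 0" by (auto simp: indicator_def)
qed

lemma bm_integrable: "bm f \<Longrightarrow> integrable lborel (\<lambda>x. indicator {0..1} x * f x)"
  unfolding bm_def by (auto intro: integrable_ind)

lemma J_cong: "(\<And>x. x \<in> {0..1} \<Longrightarrow> f x = g x) \<Longrightarrow> J f = J g"
proof -
  assume h: "\<And>x. x \<in> {0..1} \<Longrightarrow> f x = g x"
  have "(\<lambda>x. indicator {0..1} x * f x) = (\<lambda>x. indicator {0..1} x * g x :: real)"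
    using h by (auto simp: indicator_def)
  then show ?thesis unfolding J_def by simp
qed

lemma J_add: "bm f \<Longrightarrow> bm g \<Longrightarrow> J (\<lambda>x. f x + g x) = J f + J g"
  unfolding J_def by (simp add: distrib_left bm_integrable)

lemma J_diff: "bm f \<Longrightarrow> bm g \<Longrightarrow> J (\<lambda>x. f x - g x) = J f - J g"
  unfolding J_def by (simp add: right_diff_distrib bm_integrable)

lemma J_cmult: "J (\<lambda>x. c * f x) = c * J f"
  unfolding J_def by (simp add: mult.left_commute)

lemma J_const: "J (\<lambda>x. c) = c"
  unfolding J_def by (simp add: content_real)

lemma J_abs_le: "bm f \<Longrightarrow> (\<And>x. x \<in> {0..1} \<Longrightarrow> \<bar>f x\<bar> \<le> c) \<Longrightarrow> \<bar>J f\<bar> \<le> c"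
proof -
  assume f: "bm f" and c: "\<And>x. x \<in> {0..1} \<Longrightarrow> \<bar>f x\<bar> \<le> c"
  have "\<bar>J f\<bar> \<le> (\<integral>x. \<bar>indicator {0..1} x * f x\<bar> \<partial>lborel)"
    unfolding J_def by (rule integral_abs_bound)
  also have "\<dots> \<le> (\<integral>x. indicator {0..1} (x::real) * c \<partial>lborel)"
  proof -
    have i: "integrable lborel (\<lambda>x::real. indicator {0..1} x * c)"
      by (intro integrable_mult_left) (simp add: integrable_indicator_iff emeasure_lborel_Icc ennreal_less_top)
    have i2: "integrable lborel (\<lambda>x. \<bar>indicator {0..1} x * f x\<bar>)"
      using bm_integrable[OF f] by simp
    have p: "\<And>x. \<bar>indicator {0..1} x * f x\<bar> \<le> indicator {0..1} x * c"
      using c by (auto simp: indicator_def)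
    show ?thesis by (rule integral_mono[OF i2 i]) (rule p)
  qed
  also have "(\<integral>x. indicator {0..1} (x::real) * c \<partial>lborel) = c" by (simp add: content_real)
  finally show ?thesis .
qed

lemma J_mono: "bm f \<Longrightarrow> bm g \<Longrightarrow> (\<And>x. x \<in> {0..1} \<Longrightarrow> f x \<le> g x) \<Longrightarrow> J f \<le> J g"
  unfolding J_def by (intro integral_mono bm_integrable) (auto simp: indicator_def)

lemma bm_compose_affine: "bm f \<Longrightarrow> bm (\<lambda>y. f (c + s * y))"
  unfolding bm_def by (auto intro: measurable_compose[of _ _ borel])

lemma bm_psi: "bm f \<Longrightarrow> bm (f \<circ> psi a s)"
proof -
  assume "bm f"
  have "f \<circ> psi a s = (\<lambda>y. f ((if s then 0 else 1) + (if s then a else a - 1) * y))"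
    by (auto simp: psi_def algebra_simps)
  then show ?thesis using bm_compose_affine[OF \<open>bm f\<close>] by simp
qed

lemma bm_Psi: "0 < a \<Longrightarrow> a < 1 \<Longrightarrow> bm f \<Longrightarrow> bm (f \<circ> Psi a w)"
proof -
  assume h: "0 < a" "a < 1" "bm f"
  obtain c s where "\<forall>y. Psi a w y = c + s * y" using Psi_affine[OF h(1,2)] by blast
  then have "f \<circ> Psi a w = (\<lambda>y. f (c + s * y))" by auto
  then show ?thesis using bm_compose_affine[OF h(3)] by simp
qed

lemma J_one_step:
  assumes a: "0 < a" "a < 1" and f: "bm f"
  shows "J f = a * J (f \<circ> psi a True) + (1 - a) * J (f \<circ> psi a False)"
proof -
  have m: "f \<in> borel_measurable borel" and "\<exists>B. \<forall>x. \<bar>f x\<bar> \<le> B" using f by (auto simp: bm_def)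
  then obtain B where B: "\<And>x. \<bar>f x\<bar> \<le> B" by blast
  have split: "(\<lambda>x. indicator {0..1} x * f x) = (\<lambda>x. indicator {0..a} x * f x + indicator {a<..1} x * f x)"
    using a by (auto simp: indicator_def fun_eq_iff)
  have i1: "integrable lborel (\<lambda>x. indicator {0..a} x * f x)" by (rule integrable_ind[OF m B]) (use a in auto)
  have i2: "integrable lborel (\<lambda>x. indicator {a<..1} x * f x)" by (rule integrable_ind[OF m B]) (use a in auto)
  have e1: "(\<integral>x. indicator {0..a} x * f x \<partial>lborel) = a * J (f \<circ> psi a True)"
  proof -
    have "(\<integral>x. indicator {0..a} x * f x \<partial>lborel) = \<bar>a\<bar> *\<^sub>R (\<integral>x. indicator {0..a} (0 + a * x) * f (0 + a * x) \<partial>lborel)"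
      using a by (intro lborel_integral_real_affine) simp
    also have "(\<lambda>x. indicator {0..a} (0 + a * x) * f (0 + a * x)) = (\<lambda>x. indicator {0..1} x * (f \<circ> psi a True) x :: real)"
      using a by (auto simp: indicator_def psi_def fun_eq_iff zero_le_mult_iff mult_le_cancel_left1)
    finally show ?thesis using a by (simp add: J_def)
  qed
  have e2: "(\<integral>x. indicator {a<..1} x * f x \<partial>lborel) = (1 - a) * J (f \<circ> psi a False)"
  proof -
    have "(\<integral>x. indicator {a<..1} x * f x \<partial>lborel) = \<bar>a - 1\<bar> *\<^sub>R (\<integral>x. indicator {a<..1} (1 + (a - 1) * x) * f (1 + (a - 1) * x) \<partial>lborel)"
      using a by (intro lborel_integral_real_affine) simp
    also have "(\<integral>x. indicator {a<..1} (1 + (a - 1) * x) * f (1 + (a - 1) * x) \<partial>lborel) = (\<integral>x. indicator {0..1} x * (f \<circ> psi a False) x \<partial>lborel)"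
    proof (rule integral_cong_AE)
      show "(\<lambda>x. indicator {a<..1} (1 + (a - 1) * x) * f (1 + (a - 1) * x)) \<in> borel_measurable lborel"
        using m by simp
      show "(\<lambda>x. indicator {0..1} x * (f \<circ> psi a False) x) \<in> borel_measurable lborel"
        using m by (simp add: psi_def)
      have h1: "\<And>x. x \<noteq> 1 \<Longrightarrow> indicator {a<..1} (1 + (a - 1) * x) * f (1 + (a - 1) * x) = indicator {0..1} x * (f \<circ> psi a False) x"
      proof -
        fix x :: real assume x1: "x \<noteq> 1"
        have "(1 + (a - 1) * x \<in> {a<..1}) \<longleftrightarrow> x \<in> {0..1}"
        proof
          assume "1 + (a - 1) * x \<in> {a<..1}"
          then have "(1 - a) * x \<ge> 0" "(1-a) * x < (1 - a) * 1" by (auto simp: algebra_simps)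
          then show "x \<in> {0..1}" using a by (auto simp: zero_le_mult_iff mult_less_cancel_left)
        next
          assume "x \<in> {0..1}"
          then have "x < 1" "0 \<le> x" using x1 by auto
          then have "(1 - a) * x \<ge> 0" "(1-a) * x < (1 - a) * 1" using a by (auto simp: mult_less_cancel_left)
          then show "1 + (a - 1) * x \<in> {a<..1}" by (auto simp: algebra_simps)
        qed
        then show "indicator {a<..1} (1 + (a - 1) * x) * f (1 + (a - 1) * x) = indicator {0..1} x * (f \<circ> psi a False) x"
          by (auto simp: indicator_def psi_def algebra_simps)
      qed
      show "AE x in lborel. indicator {a<..1} (1 + (a - 1) * x) * f (1 + (a - 1) * x) = indicator {0..1} x * (f \<circ> psi a False) x"
        using AE_lborel_singleton[of 1] by (rule AE_mp) (intro AE_I2 impI h1)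
    qed
    finally show ?thesis using a by (simp add: J_def)
  qed
  have "J f = (\<integral>x. indicator {0..a} x * f x \<partial>lborel) + (\<integral>x. indicator {a<..1} x * f x \<partial>lborel)"
    unfolding J_def split using i1 i2 by simp
  then show ?thesis using e1 e2 by simp
qed

lemma transfer:
  assumes a: "0 < a" "a < 1"
  shows "bm f \<Longrightarrow> J f = (\<Sum>w\<in>W n. wt a w * J (f \<circ> Psi a w))"
proof (induction n arbitrary: f)
  case 0 then show ?case by (simp add: W_0)
next
  case (Suc n)
  have "J f = a * J (f \<circ> psi a True) + (1 - a) * J (f \<circ> psi a False)"
    using J_one_step[OF a Suc.prems] .
  also have "J (f \<circ> psi a True) = (\<Sum>w\<in>W n. wt a w * J (f \<circ> psi a True \<circ> Psi a w))"
    using Suc.IH[OF bm_psi[OF Suc.prems]] .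
  also have "J (f \<circ> psi a False) = (\<Sum>w\<in>W n. wt a w * J (f \<circ> psi a False \<circ> Psi a w))"
    using Suc.IH[OF bm_psi[OF Suc.prems]] .
  finally show ?case
    by (simp add: sum_W_Suc sum_distrib_left cf_def comp_def mult.assoc)
qed

lemma J_invariant:
  assumes a: "0 < a" "a < 1" and f: "bm f"
  shows "J (f \<circ> (T a ^^ n)) = J f"
proof -
  have bmT: "bm (f \<circ> (T a ^^ n))" using f unfolding bm_def by (auto intro: measurable_compose[of _ _ borel])
  have "J (f \<circ> (T a ^^ n)) = (\<Sum>w\<in>W n. wt a w * J (f \<circ> (T a ^^ n) \<circ> Psi a w))"
    using transfer[OF a bmT] .
  also have "\<dots> = (\<Sum>w\<in>W n. wt a w * J f)"
  proof (rule sum.cong[OF refl])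
    fix w assume "w \<in> W n"
    then have "length w = n" by (simp add: W_def)
    then have "J (f \<circ> (T a ^^ n) \<circ> Psi a w) = J f"
      using Tn_Psi[OF a] by (intro J_cong) auto
    then show "wt a w * J (f \<circ> (T a ^^ n) \<circ> Psi a w) = wt a w * J f" by simp
  qed
  also have "\<dots> = J f" using sum_wt[OF a] by (simp add: sum_distrib_right[symmetric])
  finally show ?thesis .
qed

definition nT :: "bool list \<Rightarrow> nat" where
  "nT w = length (filter id w)"

definition hh :: "real \<Rightarrow> real" where
  "hh a = - (a * ln a + (1 - a) * ln (1 - a))"

definition XX :: "real \<Rightarrow> bool list \<Rightarrow> real" where
  "XX a w = real (nT w) - real (length w) * a"

lemma nT_Cons: "nT (s # w) = (if s then Suc (nT w) else nT w)"
  by (simp add: nT_def)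

lemma nT_le: "nT w \<le> length w"
  by (simp add: nT_def)

lemma ln_wt: "0 < a \<Longrightarrow> a < 1 \<Longrightarrow> ln (wt a w) = real (nT w) * ln a + (real (length w) - real (nT w)) * ln (1 - a)"
proof (induction w)
  case Nil then show ?case by (simp add: nT_def)
next
  case (Cons s w)
  have "ln (wt a (s # w)) = ln (cf a s) + ln (wt a w)"
    using Cons.prems wt_pos[of a w] by (simp add: ln_mult cf_def)
  then show ?case using Cons by (auto simp: nT_Cons cf_def algebra_simps)
qed

lemma ln_wt_h: "0 < a \<Longrightarrow> a < 1 \<Longrightarrow> ln (wt a w) + real (length w) * hh a = XX a w * (ln a - ln (1 - a))"
  by (simp add: ln_wt hh_def XX_def algebra_simps)

lemma XX_Cons: "XX a (s # w) = XX a w + ((if s then 1 else 0) - a)"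
  by (simp add: XX_def nT_Cons algebra_simps)

lemma sum_sq_shift:
  fixes p f :: "'b \<Rightarrow> real" and d :: real
  shows
  "(\<Sum>w\<in>A. p w * (f w + d)^2) = (\<Sum>w\<in>A. p w * (f w)^2) + 2 * d * (\<Sum>w\<in>A. p w * f w) + d^2 * (\<Sum>w\<in>A. p w)"
proof -
  have "\<And>w. p w * (f w + d)^2 = p w * (f w)^2 + (2 * d) * (p w * f w) + d^2 * p w"
    by (simp add: power2_eq_square algebra_simps)
  then show ?thesis by (simp add: sum.distrib sum_distrib_left)
qed

lemma sum_lin_shift:
  fixes p f :: "'b \<Rightarrow> real" and d :: real
  shows
  "(\<Sum>w\<in>A. p w * (f w + d)) = (\<Sum>w\<in>A. p w * f w) + d * (\<Sum>w\<in>A. p w)"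
proof -
  have "\<And>w. p w * (f w + d) = p w * f w + d * p w"
    by (simp add: algebra_simps)
  then show ?thesis by (simp add: sum.distrib sum_distrib_left)
qed

lemma sum_XX1: "0 < a \<Longrightarrow> a < 1 \<Longrightarrow> (\<Sum>w\<in>W n. wt a w * XX a w) = 0"
proof (induction n)
  case 0 then show ?case by (simp add: W_0 XX_def nT_def)
next
  case (Suc n)
  have "(\<Sum>w\<in>W (Suc n). wt a w * XX a w)
      = a * (\<Sum>w\<in>W n. wt a w * (XX a w + (1 - a))) + (1 - a) * (\<Sum>w\<in>W n. wt a w * (XX a w + (0 - a)))"
    by (simp add: sum_W_Suc XX_Cons cf_def sum_distrib_left mult.assoc)
  also have "\<dots> = 0"
    unfolding sum_lin_shift using Suc by (simp add: sum_wt algebra_simps)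
  finally show ?case .
qed

lemma sum_XX2: "0 < a \<Longrightarrow> a < 1 \<Longrightarrow> (\<Sum>w\<in>W n. wt a w * (XX a w)^2) = real n * a * (1 - a)"
proof (induction n)
  case 0 then show ?case by (simp add: W_0 XX_def nT_def)
next
  case (Suc n)
  have "(\<Sum>w\<in>W (Suc n). wt a w * (XX a w)^2)
      = a * (\<Sum>w\<in>W n. wt a w * (XX a w + (1 - a))^2) + (1 - a) * (\<Sum>w\<in>W n. wt a w * (XX a w + (0 - a))^2)"
    by (simp add: sum_W_Suc XX_Cons cf_def sum_distrib_left mult.assoc)
  also have "\<dots> = real (Suc n) * a * (1 - a)"
    unfolding sum_sq_shift using Suc by (simp add: sum_wt sum_XX1 power2_eq_square algebra_simps)
  finally show ?case .
qed

lemma div_helper: "n > 0 \<Longrightarrow> (n::real) * K / (n * e)^2 = K / (n * e^2)"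
  by (simp add: power2_eq_square field_simps)

definition Atyp :: "real \<Rightarrow> real \<Rightarrow> nat \<Rightarrow> bool list set" where
  "Atyp a e n = {w \<in> W n. real n * e \<le> \<bar>ln (wt a w) + real n * hh a\<bar>}"

lemma Atyp_bound:
  assumes a: "0 < a" "a < 1" and e: "e > 0" and n: "n > 0"
  shows "(\<Sum>w\<in>Atyp a e n. wt a w) \<le> a * (1 - a) * (ln a - ln (1 - a))^2 / (real n * e^2)"
proof -
  let ?D = "(ln a - ln (1 - a))^2"
  have sub: "Atyp a e n \<subseteq> W n" by (auto simp: Atyp_def)
  have "(\<Sum>w\<in>Atyp a e n. wt a w) * (real n * e)^2 = (\<Sum>w\<in>Atyp a e n. wt a w * (real n * e)^2)"
    by (simp add: sum_distrib_right)
  also have "\<dots> \<le> (\<Sum>w\<in>Atyp a e n. wt a w * ((XX a w)^2 * ?D))"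
  proof (rule sum_mono)
    fix w assume w: "w \<in> Atyp a e n"
    then have "length w = n" by (auto simp: Atyp_def W_def)
    then have "real n * e \<le> \<bar>XX a w * (ln a - ln (1 - a))\<bar>"
      using w ln_wt_h[OF a, of w] by (auto simp: Atyp_def)
    then have "(real n * e)^2 \<le> \<bar>XX a w * (ln a - ln (1 - a))\<bar>^2"
      using e by (intro power_mono) auto
    then have "(real n * e)^2 \<le> (XX a w * (ln a - ln (1 - a)))^2" by simp
    then show "wt a w * (real n * e)^2 \<le> wt a w * ((XX a w)^2 * ?D)"
      using wt_pos[OF a, of w] by (simp add: power_mult_distrib)
  qed
  also have "\<dots> \<le> (\<Sum>w\<in>W n. wt a w * ((XX a w)^2 * ?D))"
    using sub wt_pos[OF a] by (intro sum_mono2) (auto intro!: mult_nonneg_nonneg simp: less_imp_le)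
  also have "\<dots> = real n * (a * (1 - a) * ?D)"
  proof -
    have "(\<Sum>w\<in>W n. wt a w * ((XX a w)^2 * ?D)) = (\<Sum>w\<in>W n. wt a w * (XX a w)^2) * ?D"
      by (simp add: sum_distrib_right mult.assoc)
    then show ?thesis using sum_XX2[OF a, of n] by (simp add: mult_ac)
  qed
  finally have *: "(\<Sum>w\<in>Atyp a e n. wt a w) * (real n * e)^2 \<le> real n * (a * (1 - a) * ?D)" .
  have pos: "(real n * e)^2 > 0" using e n by simp
  have "(\<Sum>w\<in>Atyp a e n. wt a w) \<le> real n * (a * (1 - a) * ?D) / (real n * e)^2"
    using * pos by (simp add: pos_le_divide_eq)
  also have "\<dots> = a * (1 - a) * ?D / (real n * e^2)"
    using n div_helper[of "real n" "a * (1 - a) * ?D" e] by simp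
  finally show ?thesis .
qed

lemma Atyp_tendsto:
  assumes a: "0 < a" "a < 1" and e: "e > 0"
  shows "(\<lambda>n. \<Sum>w\<in>Atyp a e n. wt a w) \<longlonglongrightarrow> 0"
proof (rule tendsto_sandwich[where f="\<lambda>_. 0" and h="\<lambda>n. (a * (1 - a) * (ln a - ln (1 - a))^2 / e^2) / real n"])
  show "\<forall>\<^sub>F n in sequentially. 0 \<le> (\<Sum>w\<in>Atyp a e n. wt a w)"
    by (intro always_eventually allI sum_nonneg) (simp add: less_imp_le[OF wt_pos[OF a]])
  show "\<forall>\<^sub>F n in sequentially. (\<Sum>w\<in>Atyp a e n. wt a w) \<le> (a * (1 - a) * (ln a - ln (1 - a))^2 / e^2) / real n"
    using eventually_gt_at_top[of 0]
  proof eventually_elim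
    case (elim n)
    then show ?case using Atyp_bound[OF a e elim] by (simp add: field_simps)
  qed
  show "(\<lambda>_. 0) \<longlonglongrightarrow> (0::real)" by simp
  show "(\<lambda>n. (a * (1 - a) * (ln a - ln (1 - a))^2 / e^2) / real n) \<longlonglongrightarrow> 0"
    by (rule lim_const_over_n)
qed

lemma finite_Atyp[simp]: "finite (Atyp a e n)"
  by (rule finite_subset[of _ "W n"]) (auto simp: Atyp_def)

lemma long_in_Atyp:
  assumes a: "0 < a" "a < 1" and w: "w \<in> W n" and l: "wt a w > exp (- real n * (hh a - e))"
  shows "w \<in> Atyp a e n"
proof -
  have "ln (wt a w) > - real n * (hh a - e)"
    using l wt_pos[OF a, of w] by (metis ln_less_cancel_iff exp_gt_zero ln_exp)
  then show ?thesis using w by (auto simp: Atyp_def algebra_simps)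
qed

lemma short_in_Atyp:
  assumes a: "0 < a" "a < 1" and w: "w \<in> W n" and l: "wt a w < exp (- real n * (hh a + e))"
  shows "w \<in> Atyp a e n"
proof -
  have "ln (wt a w) < - real n * (hh a + e)"
    using l wt_pos[OF a, of w] by (metis ln_less_cancel_iff exp_gt_zero ln_exp)
  then show ?thesis using w by (auto simp: Atyp_def algebra_simps)
qed

definition I :: "real \<Rightarrow> bool list \<Rightarrow> real set" where
  "I a w = Psi a w ` {0..1}"

lemma I_sub: "0 < a \<Longrightarrow> a < 1 \<Longrightarrow> I a w \<subseteq> {0..1}"
  using Psi_range by (auto simp: I_def)

lemma I_interval:
  assumes a: "0 < a" "a < 1"
  shows "\<exists>l. I a w = {l..l + wt a w}"
proof -
  obtain c s where cs: "\<And>y. Psi a w y = c + s * y" "\<bar>s\<bar> = wt a w" using Psi_affine[OF a] by blast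
  have s0: "s \<noteq> 0" using cs(2) wt_pos[OF a, of w] by auto
  show ?thesis
  proof (cases "s > 0")
    case True
    have "I a w = {c..c + s}"
    proof
      show "I a w \<subseteq> {c..c + s}" using True by (auto simp: I_def cs(1) mult_le_cancel_left1)
      show "{c..c + s} \<subseteq> I a w"
      proof
        fix x assume x: "x \<in> {c..c + s}"
        have "(x - c) / s \<in> {0..1}" using x True by (auto simp: field_simps)
        moreover have "Psi a w ((x - c) / s) = x" using True by (simp add: cs(1))
        ultimately show "x \<in> I a w" unfolding I_def by (metis image_eqI)
      qed
    qed
    then show ?thesis using True cs(2) by (intro exI[of _ c]) simp
  next
    case False
    then have sn: "s < 0" using s0 by simp
    have "I a w = {c + s..c}"
    proof
      show "I a w \<subseteq> {c + s..c}" using sn by (auto simp: I_def cs(1) mult_le_cancel_left1 mult_le_0_iff)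
      show "{c + s..c} \<subseteq> I a w"
      proof
        fix x assume x: "x \<in> {c + s..c}"
        have "(x - c) / s \<in> {0..1}" using x sn by (auto simp: field_simps)
        moreover have "Psi a w ((x - c) / s) = x" using sn by (simp add: cs(1))
        ultimately show "x \<in> I a w" unfolding I_def by (metis image_eqI)
      qed
    qed
    then show ?thesis using sn cs(2) by (intro exI[of _ "c + s"]) simp
  qed
qed

lemma I_diam: "0 < a \<Longrightarrow> a < 1 \<Longrightarrow> x \<in> I a w \<Longrightarrow> x' \<in> I a w \<Longrightarrow> \<bar>x - x'\<bar> \<le> wt a w"
  using I_interval[of a w] by auto

lemma measure_I: "0 < a \<Longrightarrow> a < 1 \<Longrightarrow> measure lborel (I a w) = wt a w"
  using I_interval[of a w] wt_pos[of a w] by auto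

lemma I_borel: "0 < a \<Longrightarrow> a < 1 \<Longrightarrow> I a w \<in> sets borel"
  using I_interval[of a w] by auto

lemma Tn_I_lip:
  assumes a: "0 < a" "a < 1" and x: "x \<in> I a v" "x' \<in> I a v"
  shows "\<bar>(T a ^^ length v) x - (T a ^^ length v) x'\<bar> \<le> \<bar>x - x'\<bar> / wt a v"
proof -
  obtain c s where cs: "\<And>y. Psi a v y = c + s * y" "\<bar>s\<bar> = wt a v" using Psi_affine[OF a] by blast
  obtain y y' where y: "y \<in> {0..1}" "y' \<in> {0..1}" "x = Psi a v y" "x' = Psi a v y'"
    using x by (auto simp: I_def)
  have "(T a ^^ length v) x = y" "(T a ^^ length v) x' = y'" using y Tn_Psi[OF a] by auto
  moreover have "x - x' = s * (y - y')" using y cs by (simp add: algebra_simps)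
  then have "\<bar>x - x'\<bar> = wt a v * \<bar>y - y'\<bar>" using cs by (simp add: abs_mult)
  ultimately show ?thesis using wt_pos[OF a, of v] by simp
qed

lemma I_cover: "0 < a \<Longrightarrow> a < 1 \<Longrightarrow> x \<in> {0..1} \<Longrightarrow> \<exists>w\<in>W n. x \<in> I a w"
proof (induction n arbitrary: x)
  case 0 then show ?case by (simp add: W_0 I_def)
next
  case (Suc n)
  obtain s y where sy: "y \<in> {0..1}" "x = psi a s y"
  proof (cases "x \<le> a")
    case True
    then show ?thesis using that[of "x / a" True] Suc.prems by (auto simp: psi_def field_simps)
  next
    case False
    then show ?thesis using that[of "(1 - x) / (1 - a)" False] Suc.prems by (auto simp: psi_def field_simps)
  qed
  then obtain w where w: "w \<in> W n" "y \<in> I a w" using Suc.IH Suc.prems by blast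
  then obtain z where z: "z \<in> {0..1}" "y = Psi a w z" by (auto simp: I_def)
  have "x \<in> I a (s # w)" using sy z by (auto simp: I_def)
  moreover have "s # w \<in> W (Suc n)" using w by (simp add: W_def)
  ultimately show ?case by blast
qed

lemma J_indicator: "U \<in> sets borel \<Longrightarrow> J (indicator U) = measure lborel (U \<inter> {0..1})"
proof -
  assume U: "U \<in> sets borel"
  have "(\<lambda>x. indicator {0..1} x * indicator U x) = (indicator (U \<inter> {0..1}) :: real \<Rightarrow> real)"
    by (auto simp: indicator_def fun_eq_iff)
  then show ?thesis unfolding J_def by simp
qed

lemma bm_indicator: "U \<in> sets borel \<Longrightarrow> bm (indicator U)"
  unfolding bm_def by (auto intro!: exI[of _ 1] simp: indicator_def)

lemma sum_I_le:
  assumes a: "0 < a" "a < 1" and U: "U \<in> sets borel" and S: "S \<subseteq> W n" and sub: "\<And>w. w \<in> S \<Longrightarrow> I a w \<subseteq> U"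
  shows "(\<Sum>w\<in>S. wt a w) \<le> measure lborel (U \<inter> {0..1})"
proof -
  have "measure lborel (U \<inter> {0..1}) = J (indicator U)" using J_indicator[OF U] by simp
  also have "\<dots> = (\<Sum>w\<in>W n. wt a w * J (indicator U \<circ> Psi a w))"
    using transfer[OF a bm_indicator[OF U]] .
  finally have eq: "measure lborel (U \<inter> {0..1}) = (\<Sum>w\<in>W n. wt a w * J (indicator U \<circ> Psi a w))" .
  have nn: "\<And>w. 0 \<le> wt a w * J (indicator U \<circ> Psi a w)"
  proof -
    fix w
    have "0 \<le> J (indicator U \<circ> Psi a w)"
      using J_mono[of "\<lambda>_. 0" "indicator U \<circ> Psi a w"] bm_Psi[OF a bm_indicator[OF U]]
      by (auto simp: bm_def J_const)
    then show "0 \<le> wt a w * J (indicator U \<circ> Psi a w)" using wt_pos[OF a, of w] by simp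
  qed
  have "(\<Sum>w\<in>S. wt a w) = (\<Sum>w\<in>S. wt a w * J (indicator U \<circ> Psi a w))"
  proof (rule sum.cong[OF refl])
    fix w assume "w \<in> S"
    then have "J (indicator U \<circ> Psi a w) = J (\<lambda>_. 1)"
      using sub[of w] by (intro J_cong) (auto simp: I_def indicator_def)
    then show "wt a w = wt a w * J (indicator U \<circ> Psi a w)" by (simp add: J_const)
  qed
  also have "\<dots> \<le> (\<Sum>w\<in>W n. wt a w * J (indicator U \<circ> Psi a w))"
    using S nn by (intro sum_mono2) auto
  finally show ?thesis using eq by simp
qed

lemma sum_Un_le_nn:
  fixes f :: "'a \<Rightarrow> real"
  assumes "finite A" "finite B" "\<And>x. 0 \<le> f x"
  shows "sum f (A \<union> B) \<le> sum f A + sum f B"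
  using sum_Un[OF assms(1,2), of f] sum_nonneg[of "A \<inter> B" f] assms(3) by simp

lemma sum_UN_le_nn:
  fixes f :: "'a \<Rightarrow> real"
  assumes "finite K" "\<And>i. i \<in> K \<Longrightarrow> finite (A i)" "\<And>x. 0 \<le> f x"
  shows "sum f (\<Union>i\<in>K. A i) \<le> (\<Sum>i\<in>K. sum f (A i))"
  using assms
proof (induction K rule: finite_induct)
  case empty then show ?case by simp
next
  case (insert i K)
  have "sum f (\<Union>j\<in>insert i K. A j) = sum f (A i \<union> (\<Union>j\<in>K. A j))" by simp
  also have "\<dots> \<le> sum f (A i) + sum f (\<Union>j\<in>K. A j)"
    using insert by (intro sum_Un_le_nn) auto
  also have "\<dots> \<le> sum f (A i) + (\<Sum>j\<in>K. sum f (A j))"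
    using insert by simp
  finally show ?case using insert by simp
qed

lemma sum_point_le:
  assumes a: "0 < a" "a < 1" and r: "r > 0"
  shows "(\<Sum>w\<in>{w\<in>W n. wt a w \<le> r \<and> p \<in> I a w}. wt a w) \<le> 2 * r"
proof -
  have "(\<Sum>w\<in>{w\<in>W n. wt a w \<le> r \<and> p \<in> I a w}. wt a w) \<le> measure lborel (cball p r \<inter> {0..1})"
  proof (rule sum_I_le[OF a])
    fix w assume w: "w \<in> {w\<in>W n. wt a w \<le> r \<and> p \<in> I a w}"
    show "I a w \<subseteq> cball p r"
    proof
      fix x assume "x \<in> I a w"
      then have "\<bar>x - p\<bar> \<le> wt a w" using w I_diam[OF a] by blast
      then show "x \<in> cball p r" using w by (auto simp: dist_real_def)
    qed
  qed auto
  also have "\<dots> \<le> measure lborel (cball p r)"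
    using r by (intro measure_mono_fmeasurable) (auto simp: cball_eq_atLeastAtMost fmeasurable_def emeasure_lborel_Icc ennreal_less_top)
  also have "\<dots> = 2 * r" using r by (simp add: cball_eq_atLeastAtMost)
  finally show ?thesis .
qed

definition lo :: "real \<Rightarrow> bool list \<Rightarrow> real" where
  "lo a w = (SOME l. I a w = {l..l + wt a w})"

lemma I_lo: "0 < a \<Longrightarrow> a < 1 \<Longrightarrow> I a w = {lo a w..lo a w + wt a w}"
  unfolding lo_def using I_interval[of a w] by (rule someI_ex) 

definition Good :: "real \<Rightarrow> real \<Rightarrow> nat \<Rightarrow> real \<Rightarrow> real \<Rightarrow> bool list \<Rightarrow> bool" where
  "Good a b n r s w \<longleftrightarrow> wt a w \<le> r \<and> (\<exists>v\<in>W n. s \<le> wt b v \<and> I a w \<subseteq> I b v)"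

lemma card_N:
  assumes b: "0 < b" "b < 1" and s: "s > 0"
  shows "real (card {v\<in>W n. s \<le> wt b v}) \<le> 1 / s"
proof -
  have "real (card {v\<in>W n. s \<le> wt b v}) * s = (\<Sum>v\<in>{v\<in>W n. s \<le> wt b v}. s)" by simp
  also have "\<dots> \<le> (\<Sum>v\<in>{v\<in>W n. s \<le> wt b v}. wt b v)" by (intro sum_mono) auto
  also have "\<dots> \<le> (\<Sum>v\<in>W n. wt b v)" using wt_pos[OF b] by (intro sum_mono2) (auto simp: less_imp_le)
  also have "\<dots> = 1" using sum_wt[OF b] .
  finally show ?thesis using s by (simp add: field_simps)
qed

lemma geo:
  assumes a: "0 < a" "a < 1" and b: "0 < b" "b < 1" and r: "r > 0" and s: "s > 0"
  shows "(\<Sum>w\<in>{w\<in>W n. \<not> Good a b n r s w}. wt a w)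
     \<le> (\<Sum>w\<in>{w\<in>W n. r < wt a w}. wt a w) + (\<Sum>v\<in>{v\<in>W n. wt b v < s}. wt b v)
        + 4 * r * real (card {v\<in>W n. s \<le> wt b v})"
proof -
  define B1 where "B1 = {w\<in>W n. r < wt a w}"
  define Sh where "Sh = {v\<in>W n. wt b v < s}"
  define N where "N = {v\<in>W n. s \<le> wt b v}"
  define U where "U = (\<Union>v\<in>Sh. I b v)"
  define B2 where "B2 = {w\<in>W n. wt a w \<le> r \<and> I a w \<subseteq> U}"
  define E1 where "E1 = (\<lambda>v. {w\<in>W n. wt a w \<le> r \<and> lo b v \<in> I a w})"
  define E2 where "E2 = (\<lambda>v. {w\<in>W n. wt a w \<le> r \<and> lo b v + wt b v \<in> I a w})"
  define B3 where "B3 = (\<Union>v\<in>N. E1 v \<union> E2 v)"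
  have fin: "finite Sh" "finite N" "finite B1" "finite B2" "\<And>v. finite (E1 v)" "\<And>v. finite (E2 v)"
    by (auto simp: Sh_def N_def B1_def B2_def E1_def E2_def)
  have finB3: "finite B3" using fin by (auto simp: B3_def)
  have nn: "\<And>w. 0 \<le> wt a w" using wt_pos[OF a] less_imp_le by blast
  have cover: "{w\<in>W n. \<not> Good a b n r s w} \<subseteq> B1 \<union> B2 \<union> B3"
  proof
    fix w assume w: "w \<in> {w\<in>W n. \<not> Good a b n r s w}"
    show "w \<in> B1 \<union> B2 \<union> B3"
    proof (cases "r < wt a w")
      case True then show ?thesis using w by (auto simp: B1_def)
    next
      case False
      then have wr: "wt a w \<le> r" by simp
      show ?thesis
      proof (cases "I a w \<subseteq> U")
        case True then show ?thesis using w wr by (auto simp: B2_def)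
      next
        case False
        then obtain x where x: "x \<in> I a w" "x \<notin> U" by blast
        then have "x \<in> {0..1}" using I_sub[OF a] by blast
        then obtain v where v: "v \<in> W n" "x \<in> I b v" using I_cover[OF b] by blast
        have "\<not> wt b v < s" using v x by (auto simp: U_def Sh_def)
        then have vN: "v \<in> N" using v by (auto simp: N_def)
        then have "\<not> I a w \<subseteq> I b v" using w wr v by (auto simp: Good_def N_def)
        then obtain y where y: "y \<in> I a w" "y \<notin> I b v" by blast
        have Iw: "I a w = {lo a w..lo a w + wt a w}" and Iv: "I b v = {lo b v..lo b v + wt b v}"
          using I_lo[OF a] I_lo[OF b] by auto
        have "lo b v \<in> I a w \<or> lo b v + wt b v \<in> I a w"
          using x(1) v(2) y unfolding Iw Iv by auto
        then have "w \<in> E1 v \<union> E2 v" using w wr by (auto simp: E1_def E2_def)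
        then show ?thesis using vN by (auto simp: B3_def)
      qed
    qed
  qed
  have "(\<Sum>w\<in>{w\<in>W n. \<not> Good a b n r s w}. wt a w) \<le> (\<Sum>w\<in>B1 \<union> B2 \<union> B3. wt a w)"
    using cover fin finB3 nn by (intro sum_mono2) auto
  also have "\<dots> \<le> (\<Sum>w\<in>B1. wt a w) + (\<Sum>w\<in>B2. wt a w) + (\<Sum>w\<in>B3. wt a w)"
    using fin finB3 nn sum_Un_le_nn[of "B1 \<union> B2" B3 "wt a"] sum_Un_le_nn[of B1 B2 "wt a"] by simp
  also have "(\<Sum>w\<in>B2. wt a w) \<le> (\<Sum>v\<in>Sh. wt b v)"
  proof -
    have Ub: "U \<in> sets borel" using fin I_borel[OF b] by (auto simp: U_def)
    have "(\<Sum>w\<in>B2. wt a w) \<le> measure lborel (U \<inter> {0..1})"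
      by (rule sum_I_le[OF a Ub, of B2 n]) (auto simp: B2_def)
    also have "U \<inter> {0..1} = U" using I_sub[OF b] by (auto simp: U_def)
    also have "measure lborel U \<le> (\<Sum>v\<in>Sh. measure lborel (I b v))"
      unfolding U_def using fin I_borel[OF b] by (intro measure_UNION_le) auto
    also have "\<dots> = (\<Sum>v\<in>Sh. wt b v)" using measure_I[OF b] by simp
    finally show ?thesis .
  qed
  also have "(\<Sum>w\<in>B3. wt a w) \<le> 4 * r * real (card N)"
  proof -
    have "(\<Sum>w\<in>B3. wt a w) \<le> (\<Sum>v\<in>N. sum (wt a) (E1 v \<union> E2 v))"
      unfolding B3_def using fin nn by (intro sum_UN_le_nn) auto
    also have "\<dots> \<le> (\<Sum>v\<in>N. 4 * r)"
    proof (rule sum_mono)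
      fix v
      have "sum (wt a) (E1 v \<union> E2 v) \<le> sum (wt a) (E1 v) + sum (wt a) (E2 v)"
        using fin nn by (intro sum_Un_le_nn) auto
      also have "sum (wt a) (E1 v) \<le> 2 * r"
        unfolding E1_def by (rule sum_point_le[OF a r])
      also have "sum (wt a) (E2 v) \<le> 2 * r"
        unfolding E2_def by (rule sum_point_le[OF a r])
      finally show "sum (wt a) (E1 v \<union> E2 v) \<le> 4 * r" by simp
    qed
    also have "\<dots> = 4 * r * real (card N)" by simp
    finally show ?thesis .
  qed
  finally show ?thesis by (simp add: B1_def Sh_def N_def)
qed

lemma exp_neg_lim: "c > 0 \<Longrightarrow> (\<lambda>n. exp (- c * real n)) \<longlonglongrightarrow> 0"
proof -
  assume c: "c > 0"
  have "(\<lambda>n. exp (- c * real n)) = (\<lambda>n. exp (- c) ^ n)"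
    by (auto simp: fun_eq_iff exp_of_nat_mult[symmetric] mult.commute)
  moreover have "(\<lambda>n. exp (- c) ^ n) \<longlonglongrightarrow> 0"
    using c by (intro LIMSEQ_power_zero) simp
  ultimately show ?thesis by simp
qed

lemma osc:
  assumes a: "0 < a" "a < 1" and b: "0 < b" "b < 1" and hb: "hh b < hh a"
  obtains \<beta> :: "nat \<Rightarrow> bool list \<Rightarrow> real" where
    "\<And>n w. 0 \<le> \<beta> n w"
    "\<And>n w x x'. w \<in> W n \<Longrightarrow> x \<in> I a w \<Longrightarrow> x' \<in> I a w \<Longrightarrow> min 1 \<bar>(T b ^^ n) x - (T b ^^ n) x'\<bar> \<le> \<beta> n w"
    "(\<lambda>n. \<Sum>w\<in>W n. wt a w * \<beta> n w) \<longlonglongrightarrow> 0"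
proof -
  define e where "e = (hh a - hh b) / 4"
  have e: "e > 0" using hb by (simp add: e_def)
  define r where "r = (\<lambda>n::nat. exp (- real n * (hh a - e)))"
  define s where "s = (\<lambda>n::nat. exp (- real n * (hh b + e)))"
  define q where "q = (\<lambda>n::nat. exp (- (2 * e) * real n))"
  have rs: "\<And>n. r n / s n = q n"
    by (simp add: r_def s_def q_def e_def exp_diff[symmetric] field_simps)
  have rpos: "\<And>n. r n > 0" and spos: "\<And>n. s n > 0" by (auto simp: r_def s_def)
  define \<beta> where "\<beta> = (\<lambda>n w. if Good a b n (r n) (s n) w then q n else 1)"
  have nn: "\<And>n w. 0 \<le> \<beta> n w" by (simp add: \<beta>_def q_def)
  have osc1: "min 1 \<bar>(T b ^^ n) x - (T b ^^ n) x'\<bar> \<le> \<beta> n w"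
    if w: "w \<in> W n" and x: "x \<in> I a w" "x' \<in> I a w" for n w x x'
  proof (cases "Good a b n (r n) (s n) w")
    case True
    then obtain v where v: "v \<in> W n" "s n \<le> wt b v" "I a w \<subseteq> I b v" and wr: "wt a w \<le> r n"
      by (auto simp: Good_def)
    have lv: "length v = n" using v by (simp add: W_def)
    have "\<bar>(T b ^^ n) x - (T b ^^ n) x'\<bar> \<le> \<bar>x - x'\<bar> / wt b v"
      using Tn_I_lip[OF b, of x v x'] x v lv by auto
    also have "\<dots> \<le> wt a w / wt b v"
      using I_diam[OF a x] wt_pos[OF b, of v] by (simp add: divide_right_mono)
    also have "\<dots> \<le> r n / s n"
      using wr v(2) wt_pos[OF a, of w] wt_pos[OF b, of v] spos[of n]
      by (simp add: frac_le)
    finally show ?thesis using True rs by (simp add: \<beta>_def min.coboundedI2)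
  next
    case False then show ?thesis by (simp add: \<beta>_def)
  qed
  have bound: "(\<Sum>w\<in>W n. wt a w * \<beta> n w) \<le> 5 * q n + (\<Sum>w\<in>Atyp a e n. wt a w) + (\<Sum>w\<in>Atyp b e n. wt b w)" for n
  proof -
    have wnn: "\<And>w. 0 \<le> wt a w" "\<And>w. 0 \<le> wt b w" using wt_pos[OF a] wt_pos[OF b] less_imp_le by blast+
    have "(\<Sum>w\<in>W n. wt a w * \<beta> n w) \<le> (\<Sum>w\<in>W n. q n * wt a w + (if \<not> Good a b n (r n) (s n) w then wt a w else 0))"
      using wnn by (intro sum_mono) (auto simp: \<beta>_def q_def)
    also have "\<dots> = q n * (\<Sum>w\<in>W n. wt a w) + (\<Sum>w\<in>{w\<in>W n. \<not> Good a b n (r n) (s n) w}. wt a w)"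
      by (simp add: sum.distrib sum_distrib_left sum.inter_filter)
    also have "(\<Sum>w\<in>W n. wt a w) = 1" using sum_wt[OF a] .
    also have "(\<Sum>w\<in>{w\<in>W n. \<not> Good a b n (r n) (s n) w}. wt a w)
       \<le> (\<Sum>w\<in>{w\<in>W n. r n < wt a w}. wt a w) + (\<Sum>v\<in>{v\<in>W n. wt b v < s n}. wt b v)
        + 4 * r n * real (card {v\<in>W n. s n \<le> wt b v})"
      using geo[OF a b rpos spos] .
    also have "(\<Sum>w\<in>{w\<in>W n. r n < wt a w}. wt a w) \<le> (\<Sum>w\<in>Atyp a e n. wt a w)"
      using wnn long_in_Atyp[OF a] by (intro sum_mono2) (auto simp: r_def)
    also have "(\<Sum>v\<in>{v\<in>W n. wt b v < s n}. wt b v) \<le> (\<Sum>w\<in>Atyp b e n. wt b w)"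
      using wnn short_in_Atyp[OF b] by (intro sum_mono2) (auto simp: s_def)
    also have "4 * r n * real (card {v\<in>W n. s n \<le> wt b v}) \<le> 4 * r n * (1 / s n)"
      using card_N[OF b spos[of n], of n] rpos[of n] by (intro mult_left_mono) auto
    also have "4 * r n * (1 / s n) = 4 * q n" using rs[of n] by simp
    finally show ?thesis by simp
  qed
  have lim: "(\<lambda>n. 5 * q n + (\<Sum>w\<in>Atyp a e n. wt a w) + (\<Sum>w\<in>Atyp b e n. wt b w)) \<longlonglongrightarrow> 5 * 0 + 0 + 0"
    unfolding q_def using e
    by (intro tendsto_add tendsto_mult tendsto_const exp_neg_lim Atyp_tendsto[OF a] Atyp_tendsto[OF b]) auto
  have "(\<lambda>n. \<Sum>w\<in>W n. wt a w * \<beta> n w) \<longlonglongrightarrow> 0"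
  proof (rule tendsto_sandwich[OF _ _ tendsto_const lim[simplified]])
    show "\<forall>\<^sub>F n in sequentially. 0 \<le> (\<Sum>w\<in>W n. wt a w * \<beta> n w)"
      using nn wt_pos[OF a] by (intro always_eventually allI sum_nonneg) (simp add: less_imp_le)
    show "\<forall>\<^sub>F n in sequentially. (\<Sum>w\<in>W n. wt a w * \<beta> n w) \<le> 5 * q n + (\<Sum>w\<in>Atyp a e n. wt a w) + (\<Sum>w\<in>Atyp b e n. wt b w)"
      using bound by (intro always_eventually allI) simp
  qed
  then show ?thesis using that[of \<beta>] nn osc1 by blast
qed

lemma hh_sym: "hh (1 - a) = hh a"
  by (simp add: hh_def algebra_simps)

lemma hh_deriv:
  assumes "0 < t" "t < 1"
  shows "(hh has_real_derivative (ln (1 - t) - ln t)) (at t)"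
proof -
  have "((\<lambda>t. - (t * ln t + (1 - t) * ln (1 - t))) has_real_derivative
          - ((1 * ln t + t * (1 / t)) + ((- 1) * ln (1 - t) + (1 - t) * ((- 1) / (1 - t))))) (at t)"
    using assms by (intro derivative_intros DERIV_ln_divide) (auto intro!: derivative_eq_intros)
  moreover have "- ((1 * ln t + t * (1 / t)) + ((- 1) * ln (1 - t) + (1 - t) * ((- 1) / (1 - t)))) = ln (1 - t) - ln t"
    using assms by (simp add: field_simps)
  ultimately show ?thesis unfolding hh_def[abs_def] by simp
qed

lemma hh_strict_mono:
  assumes "0 < x" "x < y" "y \<le> 1/2"
  shows "hh x < hh y"
proof (rule DERIV_pos_imp_increasing_open[OF assms(2)])
  fix t assume t: "x < t" "t < y"
  have "ln t < ln (1 - t)" using t assms by (subst ln_less_cancel_iff) auto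
  then show "\<exists>d. (hh has_real_derivative d) (at t) \<and> 0 < d"
    using hh_deriv[of t] t assms by (intro exI[of _ "ln (1 - t) - ln t"]) auto
next
  have "\<forall>t\<in>{x..y}. isCont hh t"
    using assms by (auto intro!: DERIV_isCont hh_deriv)
  then show "continuous_on {x..y} hh" by (intro continuous_at_imp_continuous_on) auto
qed

lemma hh_inj:
  assumes a: "0 < a" "a < 1" and b: "0 < b" "b < 1" and ab: "a \<noteq> b" "a \<noteq> 1 - b"
  shows "hh a \<noteq> hh b"
proof -
  define a' where "a' = min a (1 - a)"
  define b' where "b' = min b (1 - b)"
  have ha: "hh a = hh a'" and hb: "hh b = hh b'"
    by (auto simp: a'_def b'_def min_def hh_sym)
  have a'r: "0 < a'" "a' \<le> 1/2" and b'r: "0 < b'" "b' \<le> 1/2" using a b by (auto simp: a'_def b'_def min_def)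
  have "a' \<noteq> b'" using ab by (auto simp: a'_def b'_def min_def split: if_splits)
  then have "a' < b' \<or> b' < a'" by auto
  then have "hh a' \<noteq> hh b'"
    using hh_strict_mono[of a' b'] hh_strict_mono[of b' a'] a'r b'r by auto
  then show ?thesis using ha hb by simp
qed

lemma osc_ex:
  assumes a: "0 < a" "a < 1" and b: "0 < b" "b < 1" and hb: "hh b < hh a"
  shows "\<exists>\<beta> :: nat \<Rightarrow> bool list \<Rightarrow> real. (\<forall>n w. 0 \<le> \<beta> n w) \<and>
    (\<forall>n w x x'. w \<in> W n \<longrightarrow> x \<in> I a w \<longrightarrow> x' \<in> I a w \<longrightarrow> min 1 \<bar>(T b ^^ n) x - (T b ^^ n) x'\<bar> \<le> \<beta> n w) \<and>
    (\<lambda>n. \<Sum>w\<in>W n. wt a w * \<beta> n w) \<longlonglongrightarrow> 0"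
proof -
  obtain \<beta> where "\<And>n w. 0 \<le> \<beta> n w"
    "\<And>n w x x'. w \<in> W n \<Longrightarrow> x \<in> I a w \<Longrightarrow> x' \<in> I a w \<Longrightarrow> min 1 \<bar>(T b ^^ n) x - (T b ^^ n) x'\<bar> \<le> \<beta> n w"
    "(\<lambda>n. \<Sum>w\<in>W n. wt a w * \<beta> n w) \<longlonglongrightarrow> 0"
    using osc[OF a b hb] by blast
  then show ?thesis by blast
qed

lemma prod_abs_le1:
  fixes u :: "'i \<Rightarrow> real"
  shows "(\<And>i. i \<in> S \<Longrightarrow> \<bar>u i\<bar> \<le> 1) \<Longrightarrow> \<bar>\<Prod>i\<in>S. u i\<bar> \<le> 1"
  by (simp add: abs_prod prod_le_1)

lemma prod_diff_le:
  fixes u v :: "'i \<Rightarrow> real"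
  assumes "finite S" "\<And>i. i \<in> S \<Longrightarrow> \<bar>u i\<bar> \<le> 1" "\<And>i. i \<in> S \<Longrightarrow> \<bar>v i\<bar> \<le> 1"
  shows "\<bar>(\<Prod>i\<in>S. u i) - (\<Prod>i\<in>S. v i)\<bar> \<le> (\<Sum>i\<in>S. \<bar>u i - v i\<bar>)"
  using assms
proof (induction S rule: finite_induct)
  case empty then show ?case by simp
next
  case (insert j S)
  have pv: "\<bar>\<Prod>i\<in>S. v i\<bar> \<le> 1" using insert.prems by (intro prod_abs_le1) auto
  have uj: "\<bar>u j\<bar> \<le> 1" using insert.prems by auto
  have "(\<Prod>i\<in>insert j S. u i) - (\<Prod>i\<in>insert j S. v i)
      = u j * ((\<Prod>i\<in>S. u i) - (\<Prod>i\<in>S. v i)) + (u j - v j) * (\<Prod>i\<in>S. v i)"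
    using insert by (simp add: algebra_simps)
  also have "\<bar>\<dots>\<bar> \<le> \<bar>u j\<bar> * \<bar>(\<Prod>i\<in>S. u i) - (\<Prod>i\<in>S. v i)\<bar> + \<bar>u j - v j\<bar> * \<bar>\<Prod>i\<in>S. v i\<bar>"
    unfolding abs_mult[symmetric] by (rule abs_triangle_ineq)
  also have "\<dots> \<le> 1 * (\<Sum>i\<in>S. \<bar>u i - v i\<bar>) + \<bar>u j - v j\<bar> * 1"
    using insert uj pv by (intro add_mono mult_mono) auto
  finally show ?case using insert by simp
qed

lemma mult_diff_le:
  fixes p q p' q' :: real
  assumes "\<bar>p\<bar> \<le> 1" "\<bar>q'\<bar> \<le> 1"
  shows "\<bar>p * q - p' * q'\<bar> \<le> \<bar>q - q'\<bar> + \<bar>p - p'\<bar>"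
proof -
  have "p * q - p' * q' = p * (q - q') + (p - p') * q'" by (simp add: algebra_simps)
  also have "\<bar>\<dots>\<bar> \<le> \<bar>p\<bar> * \<bar>q - q'\<bar> + \<bar>p - p'\<bar> * \<bar>q'\<bar>"
    unfolding abs_mult[symmetric] by (rule abs_triangle_ineq)
  also have "\<dots> \<le> 1 * \<bar>q - q'\<bar> + \<bar>p - p'\<bar> * 1" using assms by (intro add_mono mult_mono) auto
  finally show ?thesis by simp
qed

lemma lip_min:
  fixes g :: "real \<Rightarrow> real"
  assumes "\<And>x. \<bar>g x\<bar> \<le> 1" "\<And>x y. \<bar>g x - g y\<bar> \<le> L * \<bar>x - y\<bar>" "L \<ge> 0"
  shows "\<bar>g x - g y\<bar> \<le> (2 + L) * min 1 \<bar>x - y\<bar>"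
proof (cases "\<bar>x - y\<bar> \<le> 1")
  case True
  have "\<bar>g x - g y\<bar> \<le> L * \<bar>x - y\<bar>" by fact
  also have "\<dots> \<le> (2 + L) * \<bar>x - y\<bar>" by (simp add: mult_right_mono)
  finally show ?thesis using True by simp
next
  case False
  have "\<bar>g x - g y\<bar> \<le> 2" using assms(1)[of x] assms(1)[of y] by simp
  then show ?thesis using False assms(3) by simp
qed

lemma bm_mult: "bm f \<Longrightarrow> bm g \<Longrightarrow> bm (\<lambda>x. f x * g x)"
proof -
  assume f: "bm f" and g: "bm g"
  then obtain B C where B: "\<And>x. \<bar>f x\<bar> \<le> B" and C: "\<And>x. \<bar>g x\<bar> \<le> C" by (auto simp: bm_def)
  have "\<And>x. \<bar>f x * g x\<bar> \<le> B * C"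
  proof -
    fix x
    have "\<bar>f x\<bar> * \<bar>g x\<bar> \<le> B * C" using B[of x] C[of x] by (intro mult_mono) (auto intro: order_trans[OF abs_ge_zero])
    then show "\<bar>f x * g x\<bar> \<le> B * C" by (simp add: abs_mult)
  qed
  then show ?thesis using f g by (auto simp: bm_def)
qed

lemma bm_diff: "bm f \<Longrightarrow> bm g \<Longrightarrow> bm (\<lambda>x. f x - g x)"
proof -
  assume f: "bm f" and g: "bm g"
  then obtain B C where B: "\<And>x. \<bar>f x\<bar> \<le> B" and C: "\<And>x. \<bar>g x\<bar> \<le> C" by (auto simp: bm_def)
  have "\<And>x. \<bar>f x - g x\<bar> \<le> B + C"
    using B C by (meson abs_triangle_ineq4 add_mono order_trans)
  then show ?thesis using f g by (auto simp: bm_def)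
qed

lemma bm_const: "bm (\<lambda>_. c)"
  by (auto simp: bm_def)

lemma bm_bounded1: "f \<in> borel_measurable borel \<Longrightarrow> (\<And>x. \<bar>f x\<bar> \<le> 1) \<Longrightarrow> bm f"
  by (auto simp: bm_def)

lemma bm_comp_T: "bm f \<Longrightarrow> bm (\<lambda>x. f ((T a ^^ n) x))"
  unfolding bm_def by (auto intro: measurable_compose[of _ _ borel])

lemma J_bm_bound: "bm f \<Longrightarrow> (\<And>x. \<bar>f x\<bar> \<le> 1) \<Longrightarrow> \<bar>J f\<bar> \<le> 1"
  by (rule J_abs_le) auto

lemma fast_slow:
  assumes a: "0 < a" "a < 1" and G: "bm G" and F: "bm F" "\<And>x. \<bar>F x\<bar> \<le> 1"
    and \<delta>: "\<And>w y. w \<in> W n \<Longrightarrow> y \<in> {0..1} \<Longrightarrow> \<bar>G (Psi a w y) - G (Psi a w 0)\<bar> \<le> \<delta> w"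
  shows "\<bar>J (\<lambda>x. G x * F ((T a ^^ n) x)) - J F * J G\<bar> \<le> 2 * (\<Sum>w\<in>W n. wt a w * \<delta> w)"
proof -
  have bGF: "bm (\<lambda>x. G x * F ((T a ^^ n) x))" using G F by (intro bm_mult bm_comp_T)
  have e1: "J (\<lambda>x. G x * F ((T a ^^ n) x)) = (\<Sum>w\<in>W n. wt a w * J (\<lambda>y. G (Psi a w y) * F y))"
  proof -
    have "J (\<lambda>x. G x * F ((T a ^^ n) x)) = (\<Sum>w\<in>W n. wt a w * J ((\<lambda>x. G x * F ((T a ^^ n) x)) \<circ> Psi a w))"
      using transfer[OF a bGF] .
    also have "\<dots> = (\<Sum>w\<in>W n. wt a w * J (\<lambda>y. G (Psi a w y) * F y))"
    proof (rule sum.cong[OF refl])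
      fix w assume "w \<in> W n"
      then have "length w = n" by (simp add: W_def)
      then have "J ((\<lambda>x. G x * F ((T a ^^ n) x)) \<circ> Psi a w) = J (\<lambda>y. G (Psi a w y) * F y)"
        using Tn_Psi[OF a] by (intro J_cong) auto
      then show "wt a w * J ((\<lambda>x. G x * F ((T a ^^ n) x)) \<circ> Psi a w) = wt a w * J (\<lambda>y. G (Psi a w y) * F y)"
        by simp
    qed
    finally show ?thesis .
  qed
  have e2: "J F * J G = (\<Sum>w\<in>W n. wt a w * (J F * J (G \<circ> Psi a w)))"
  proof -
    have "J G = (\<Sum>w\<in>W n. wt a w * J (G \<circ> Psi a w))" by (rule transfer[OF a G])
    then have "J F * J G = (\<Sum>w\<in>W n. J F * (wt a w * J (G \<circ> Psi a w)))"
      by (simp only: sum_distrib_left)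
    also have "\<dots> = (\<Sum>w\<in>W n. wt a w * (J F * J (G \<circ> Psi a w)))"
      by (rule sum.cong[OF refl]) (rule mult.left_commute)
    finally show ?thesis .
  qed
  have per: "\<bar>J (\<lambda>y. G (Psi a w y) * F y) - J F * J (G \<circ> Psi a w)\<bar> \<le> 2 * \<delta> w" if w: "w \<in> W n" for w
  proof -
    define c where "c = G (Psi a w 0)"
    define D where "D = (\<lambda>y. G (Psi a w y) - c)"
    have bG': "bm (G \<circ> Psi a w)" using bm_Psi[OF a G] .
    have bD: "bm D" unfolding D_def using bm_diff[OF bG' bm_const[of c]] by (simp add: comp_def)
    have bDF: "bm (\<lambda>y. D y * F y)" using bD F by (intro bm_mult)
    have Dle: "\<And>y. y \<in> {0..1} \<Longrightarrow> \<bar>D y\<bar> \<le> \<delta> w" using \<delta>[OF w] by (simp add: D_def c_def)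
    have d1: "J (\<lambda>y. G (Psi a w y) * F y) = J (\<lambda>y. D y * F y) + c * J F"
    proof -
      have "J (\<lambda>y. G (Psi a w y) * F y) = J (\<lambda>y. D y * F y + c * F y)"
        by (intro J_cong) (simp add: D_def algebra_simps)
      also have "\<dots> = J (\<lambda>y. D y * F y) + J (\<lambda>y. c * F y)"
        using bDF F by (intro J_add) (auto intro: bm_mult bm_const)
      finally show ?thesis by (simp add: J_cmult)
    qed
    have d2: "J (G \<circ> Psi a w) = J D + c"
    proof -
      have "J (G \<circ> Psi a w) = J (\<lambda>y. D y + c)" by (intro J_cong) (simp add: D_def)
      also have "\<dots> = J D + J (\<lambda>_. c)" using bD by (intro J_add) (auto intro: bm_const)
      finally show ?thesis by (simp add: J_const)
    qed
    have a1: "\<bar>J (\<lambda>y. D y * F y)\<bar> \<le> \<delta> w"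
    proof (rule J_abs_le[OF bDF])
      fix y :: real assume y: "y \<in> {0..1}"
      have "\<bar>D y * F y\<bar> = \<bar>D y\<bar> * \<bar>F y\<bar>" by (simp add: abs_mult)
      also have "\<dots> \<le> \<delta> w * 1" using Dle[OF y] F(2)[of y] by (intro mult_mono) auto
      finally show "\<bar>D y * F y\<bar> \<le> \<delta> w" by simp
    qed
    have a2: "\<bar>J D\<bar> \<le> \<delta> w" using J_abs_le[OF bD Dle] .
    have a3: "\<bar>J F\<bar> \<le> 1" using J_bm_bound[OF F] .
    have "J (\<lambda>y. G (Psi a w y) * F y) - J F * J (G \<circ> Psi a w) = J (\<lambda>y. D y * F y) - J F * J D"
      using d1 d2 by (simp add: algebra_simps)
    also have "\<bar>\<dots>\<bar> \<le> \<bar>J (\<lambda>y. D y * F y)\<bar> + \<bar>J F\<bar> * \<bar>J D\<bar>"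
      unfolding abs_mult[symmetric] by (rule abs_triangle_ineq4)
    also have "\<dots> \<le> \<delta> w + 1 * \<delta> w" using a1 a2 a3 by (intro add_mono mult_mono) auto
    finally show ?thesis by simp
  qed
  define S where "S = (\<Sum>w\<in>W n. wt a w * (J (\<lambda>y. G (Psi a w y) * F y) - J F * J (G \<circ> Psi a w)))"
  have eq: "J (\<lambda>x. G x * F ((T a ^^ n) x)) - J F * J G = S"
    unfolding e1 e2 S_def by (simp only: right_diff_distrib sum_subtractf)
  have h1: "\<bar>S\<bar> \<le> (\<Sum>w\<in>W n. \<bar>wt a w * (J (\<lambda>y. G (Psi a w y) * F y) - J F * J (G \<circ> Psi a w))\<bar>)"
    unfolding S_def by (rule sum_abs)
  have h2: "(\<Sum>w\<in>W n. \<bar>wt a w * (J (\<lambda>y. G (Psi a w y) * F y) - J F * J (G \<circ> Psi a w))\<bar>) \<le> (\<Sum>w\<in>W n. wt a w * (2 * \<delta> w))"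
  proof (rule sum_mono)
    fix w assume w: "w \<in> W n"
    have "\<bar>wt a w * (J (\<lambda>y. G (Psi a w y) * F y) - J F * J (G \<circ> Psi a w))\<bar>
        = wt a w * \<bar>J (\<lambda>y. G (Psi a w y) * F y) - J F * J (G \<circ> Psi a w)\<bar>"
      using wt_pos[OF a, of w] by (simp add: abs_mult)
    also have "\<dots> \<le> wt a w * (2 * \<delta> w)"
      using per[OF w] wt_pos[OF a, of w] by (intro mult_left_mono) auto
    finally show "\<bar>wt a w * (J (\<lambda>y. G (Psi a w y) * F y) - J F * J (G \<circ> Psi a w))\<bar> \<le> wt a w * (2 * \<delta> w)" .
  qed
  have h3: "(\<Sum>w\<in>W n. wt a w * (2 * \<delta> w)) = 2 * (\<Sum>w\<in>W n. wt a w * \<delta> w)"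
    unfolding sum_distrib_left by (rule sum.cong[OF refl]) (rule mult.left_commute)
  show ?thesis unfolding eq using h1 h2 h3 by linarith
qed

lemma wt_le_pow: "0 < a \<Longrightarrow> a < 1 \<Longrightarrow> wt a w \<le> max a (1 - a) ^ length w"
proof (induction w)
  case Nil then show ?case by simp
next
  case (Cons s w)
  have "wt a (s # w) = cf a s * wt a w" by simp
  also have "\<dots> \<le> max a (1 - a) * max a (1 - a) ^ length w"
    using Cons wt_pos[of a w] by (intro mult_mono) (auto simp: cf_def)
  finally show ?case by simp
qed

lemma sum_wt_sq:
  assumes a: "0 < a" "a < 1"
  shows "(\<lambda>n. \<Sum>w\<in>W n. wt a w * wt a w) \<longlonglongrightarrow> 0"
proof (rule tendsto_sandwich[where f="\<lambda>_. 0" and h="\<lambda>n. max a (1 - a) ^ n"])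
  show "\<forall>\<^sub>F n in sequentially. 0 \<le> (\<Sum>w\<in>W n. wt a w * wt a w)"
    by (intro always_eventually allI sum_nonneg) simp
  show "\<forall>\<^sub>F n in sequentially. (\<Sum>w\<in>W n. wt a w * wt a w) \<le> max a (1 - a) ^ n"
  proof (intro always_eventually allI)
    fix n
    have "(\<Sum>w\<in>W n. wt a w * wt a w) \<le> (\<Sum>w\<in>W n. wt a w * max a (1 - a) ^ n)"
      using wt_le_pow[OF a] wt_pos[OF a] by (intro sum_mono mult_left_mono) (auto simp: W_def less_imp_le)
    also have "\<dots> = max a (1 - a) ^ n" using sum_wt[OF a] by (simp add: sum_distrib_right[symmetric])
    finally show "(\<Sum>w\<in>W n. wt a w * wt a w) \<le> max a (1 - a) ^ n" .
  qed
  show "(\<lambda>_. 0) \<longlonglongrightarrow> (0::real)" by simp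
  show "(\<lambda>n. max a (1 - a) ^ n) \<longlonglongrightarrow> 0" using a by (intro LIMSEQ_power_zero) auto
qed

lemma bm_prodT:
  assumes "\<And>i. i \<in> S \<Longrightarrow> g i \<in> borel_measurable borel" "\<And>i x. i \<in> S \<Longrightarrow> \<bar>g i x\<bar> \<le> 1"
  shows "bm (\<lambda>x. \<Prod>i\<in>S. g i ((T (a i) ^^ n) x))"
proof -
  have "(\<lambda>x. \<Prod>i\<in>S. g i ((T (a i) ^^ n) x)) \<in> borel_measurable borel"
    using assms(1) by (intro borel_measurable_prod) (auto intro: measurable_compose[of _ _ borel])
  moreover have "\<And>x. \<bar>\<Prod>i\<in>S. g i ((T (a i) ^^ n) x)\<bar> \<le> 1"
    using assms(2) by (intro prod_abs_le1) auto
  ultimately show ?thesis by (auto simp: bm_def)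
qed

lemma main_lip:
  fixes a :: "nat \<Rightarrow> real" and g :: "nat \<Rightarrow> real \<Rightarrow> real" and g0 :: "real \<Rightarrow> real" and B :: "nat set"
  assumes finB: "finite B"
    and a: "\<And>i. i \<in> B \<Longrightarrow> 0 < a i \<and> a i < 1"
    and hinj: "\<And>i j. i \<in> B \<Longrightarrow> j \<in> B \<Longrightarrow> i \<noteq> j \<Longrightarrow> hh (a i) \<noteq> hh (a j)"
    and g0m: "g0 \<in> borel_measurable borel" and g0b: "\<And>x. \<bar>g0 x\<bar> \<le> 1"
    and g0L: "\<And>x y. \<bar>g0 x - g0 y\<bar> \<le> L * \<bar>x - y\<bar>"
    and gm: "\<And>i. i \<in> B \<Longrightarrow> g i \<in> borel_measurable borel"
    and gb: "\<And>i x. i \<in> B \<Longrightarrow> \<bar>g i x\<bar> \<le> 1"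
    and gL: "\<And>i x y. i \<in> B \<Longrightarrow> \<bar>g i x - g i y\<bar> \<le> L * \<bar>x - y\<bar>"
    and L: "L \<ge> 0"
  shows "(\<lambda>n. J (\<lambda>x. g0 x * (\<Prod>i\<in>B. g i ((T (a i) ^^ n) x)))) \<longlonglongrightarrow> J g0 * (\<Prod>i\<in>B. J (g i))"
proof -
  define P where "P = (\<lambda>S. (\<lambda>n. J (\<lambda>x. g0 x * (\<Prod>i\<in>S. g i ((T (a i) ^^ n) x)))) \<longlonglongrightarrow> J g0 * (\<Prod>i\<in>S. J (g i)))"
  have bg0: "bm g0" using g0m g0b by (rule bm_bounded1)
  have "P B"
  proof (rule finite_remove_induct[OF finB, of P])
    show "P {}" by (simp add: P_def)
  next
    fix A assume A: "finite A" "A \<noteq> {}" "A \<subseteq> B" and IH: "\<And>x. x \<in> A \<Longrightarrow> P (A - {x})"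
    have "Max ((\<lambda>i. hh (a i)) ` A) \<in> (\<lambda>i. hh (a i)) ` A" using A by (intro Max_in) auto
    then obtain j where j: "j \<in> A" "hh (a j) = Max ((\<lambda>i. hh (a i)) ` A)" by auto
    have aj: "0 < a j" "a j < 1" using a j A by auto
    have lt: "hh (a i) < hh (a j)" if "i \<in> A - {j}" for i
    proof -
      have le: "hh (a i) \<le> hh (a j)" using j that A by auto
      have "i \<in> B" "j \<in> B" "i \<noteq> j" using that j(1) A(3) by auto
      then have "hh (a i) \<noteq> hh (a j)" by (rule hinj)
      then show ?thesis using le by simp
    qed
    define A' where "A' = A - {j}"
    have finA': "finite A'" using A by (simp add: A'_def)
    have ai: "0 < a i" "a i < 1" if "i \<in> A'" for i using a that A by (auto simp: A'_def)
    have ex: "\<forall>i\<in>A'. \<exists>\<beta> :: nat \<Rightarrow> bool list \<Rightarrow> real. (\<forall>n w. 0 \<le> \<beta> n w) \<and>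
      (\<forall>n w x x'. w \<in> W n \<longrightarrow> x \<in> I (a j) w \<longrightarrow> x' \<in> I (a j) w \<longrightarrow> min 1 \<bar>(T (a i) ^^ n) x - (T (a i) ^^ n) x'\<bar> \<le> \<beta> n w) \<and>
      (\<lambda>n. \<Sum>w\<in>W n. wt (a j) w * \<beta> n w) \<longlonglongrightarrow> 0"
      using osc_ex[OF aj] ai lt by (auto simp: A'_def)
    obtain \<beta> where \<beta>: "\<And>i. i \<in> A' \<Longrightarrow> (\<forall>n w. 0 \<le> \<beta> i n w) \<and>
      (\<forall>n w x x'. w \<in> W n \<longrightarrow> x \<in> I (a j) w \<longrightarrow> x' \<in> I (a j) w \<longrightarrow> min 1 \<bar>(T (a i) ^^ n) x - (T (a i) ^^ n) x'\<bar> \<le> \<beta> i n w) \<and>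
      (\<lambda>n. \<Sum>w\<in>W n. wt (a j) w * \<beta> i n w) \<longlonglongrightarrow> 0"
      using bchoice[OF ex] by blast
    define Pr where "Pr = (\<lambda>n x. \<Prod>i\<in>A'. g i ((T (a i) ^^ n) x))"
    define G where "G = (\<lambda>n x. g0 x * Pr n x)"
    define \<delta> where "\<delta> = (\<lambda>n w. L * wt (a j) w + (2 + L) * (\<Sum>i\<in>A'. \<beta> i n w))"
    have gA': "\<And>i. i \<in> A' \<Longrightarrow> g i \<in> borel_measurable borel" "\<And>i x. i \<in> A' \<Longrightarrow> \<bar>g i x\<bar> \<le> 1"
      using gm gb A by (auto simp: A'_def)
    have bPr: "bm (Pr n)" for n unfolding Pr_def using gA' by (rule bm_prodT)
    have Prb: "\<bar>Pr n x\<bar> \<le> 1" for n x unfolding Pr_def using gA' by (intro prod_abs_le1) auto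
    have bG: "bm (G n)" for n unfolding G_def using bg0 bPr by (rule bm_mult)
    have jB: "j \<in> B" using j(1) A(3) by auto
    have bF: "bm (g j)" "\<And>x. \<bar>g j x\<bar> \<le> 1" using gm[OF jB] gb[OF jB] by (auto intro: bm_bounded1)
    have eqA: "J (\<lambda>x. g0 x * (\<Prod>i\<in>A. g i ((T (a i) ^^ n) x))) = J (\<lambda>x. G n x * g j ((T (a j) ^^ n) x))" for n
    proof -
      have "\<And>x. (\<Prod>i\<in>A. g i ((T (a i) ^^ n) x)) = g j ((T (a j) ^^ n) x) * Pr n x"
        unfolding Pr_def A'_def using prod.remove[OF A(1) j(1)] by blast
      then show ?thesis by (simp add: G_def mult_ac)
    qed
    have dbound: "\<bar>G n (Psi (a j) w y) - G n (Psi (a j) w 0)\<bar> \<le> \<delta> n w"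
      if w: "w \<in> W n" and y: "y \<in> {0..1}" for n w y
    proof -
      define x where "x = Psi (a j) w y"
      define x0 where "x0 = Psi (a j) w 0"
      have xI: "x \<in> I (a j) w" "x0 \<in> I (a j) w" using y by (auto simp: I_def x_def x0_def)
      have "\<bar>G n x - G n x0\<bar> \<le> \<bar>Pr n x - Pr n x0\<bar> + \<bar>g0 x - g0 x0\<bar>"
        unfolding G_def using g0b Prb by (intro mult_diff_le)
      also have "\<bar>g0 x - g0 x0\<bar> \<le> L * wt (a j) w"
        using g0L[of x x0] I_diam[OF aj xI] L by (meson mult_left_mono order_trans)
      also have "\<bar>Pr n x - Pr n x0\<bar> \<le> (\<Sum>i\<in>A'. \<bar>g i ((T (a i) ^^ n) x) - g i ((T (a i) ^^ n) x0)\<bar>)"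
        unfolding Pr_def using finA' gA'(2) by (intro prod_diff_le) auto
      also have "\<dots> \<le> (\<Sum>i\<in>A'. (2 + L) * \<beta> i n w)"
      proof (rule sum_mono)
        fix i assume i: "i \<in> A'"
        have "\<bar>g i ((T (a i) ^^ n) x) - g i ((T (a i) ^^ n) x0)\<bar> \<le> (2 + L) * min 1 \<bar>(T (a i) ^^ n) x - (T (a i) ^^ n) x0\<bar>"
          using gA'(2)[OF i] gL[of i] i L A by (intro lip_min) (auto simp: A'_def)
        also have "\<dots> \<le> (2 + L) * \<beta> i n w"
          using \<beta>[OF i] w xI L by (intro mult_left_mono) auto
        finally show "\<bar>g i ((T (a i) ^^ n) x) - g i ((T (a i) ^^ n) x0)\<bar> \<le> (2 + L) * \<beta> i n w" .
      qed
      finally show ?thesis by (simp add: \<delta>_def x_def x0_def sum_distrib_left algebra_simps)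
    qed
    have fs: "\<bar>J (\<lambda>x. G n x * g j ((T (a j) ^^ n) x)) - J (g j) * J (G n)\<bar> \<le> 2 * (\<Sum>w\<in>W n. wt (a j) w * \<delta> n w)" for n
      using fast_slow[OF aj bG bF, where n=n and \<delta>="\<delta> n"] dbound by blast
    have sdelta: "(\<Sum>w\<in>W n. wt (a j) w * \<delta> n w)
        = L * (\<Sum>w\<in>W n. wt (a j) w * wt (a j) w) + (2 + L) * (\<Sum>i\<in>A'. \<Sum>w\<in>W n. wt (a j) w * \<beta> i n w)" for n
    proof -
      have "(\<Sum>w\<in>W n. wt (a j) w * \<delta> n w)
          = (\<Sum>w\<in>W n. L * (wt (a j) w * wt (a j) w) + (2 + L) * (\<Sum>i\<in>A'. wt (a j) w * \<beta> i n w))"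
        by (rule sum.cong[OF refl]) (simp add: \<delta>_def distrib_left sum_distrib_left mult_ac)
      also have "\<dots> = L * (\<Sum>w\<in>W n. wt (a j) w * wt (a j) w) + (2 + L) * (\<Sum>w\<in>W n. \<Sum>i\<in>A'. wt (a j) w * \<beta> i n w)"
        by (simp only: sum.distrib sum_distrib_left[symmetric])
      also have "(\<Sum>w\<in>W n. \<Sum>i\<in>A'. wt (a j) w * \<beta> i n w) = (\<Sum>i\<in>A'. \<Sum>w\<in>W n. wt (a j) w * \<beta> i n w)"
        by (rule sum.swap)
      finally show ?thesis .
    qed
    have Elim: "(\<lambda>n. 2 * (\<Sum>w\<in>W n. wt (a j) w * \<delta> n w)) \<longlonglongrightarrow> 2 * (L * 0 + (2 + L) * (\<Sum>i\<in>A'. 0))"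
      unfolding sdelta using \<beta> sum_wt_sq[OF aj]
      by (intro tendsto_mult tendsto_add tendsto_const tendsto_sum) auto
    have d0: "(\<lambda>n. J (\<lambda>x. G n x * g j ((T (a j) ^^ n) x)) - J (g j) * J (G n)) \<longlonglongrightarrow> 0"
    proof -
      have z: "2 * (L * 0 + (2 + L) * (\<Sum>i\<in>A'. 0)) = (0::real)" by simp
      show ?thesis
        by (rule Lim_null_comparison[OF _ Elim[unfolded z]]) (use fs in simp)
    qed
    have IH': "(\<lambda>n. J (G n)) \<longlonglongrightarrow> J g0 * (\<Prod>i\<in>A'. J (g i))"
      using IH[OF j(1)] by (simp add: P_def G_def Pr_def A'_def)
    have "(\<lambda>n. (J (\<lambda>x. G n x * g j ((T (a j) ^^ n) x)) - J (g j) * J (G n)) + J (g j) * J (G n))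
       \<longlonglongrightarrow> 0 + J (g j) * (J g0 * (\<Prod>i\<in>A'. J (g i)))"
      by (intro tendsto_add d0 tendsto_mult tendsto_const IH')
    moreover have "J (g j) * (J g0 * (\<Prod>i\<in>A'. J (g i))) = J g0 * (\<Prod>i\<in>A. J (g i))"
      using prod.remove[OF A(1) j(1), of "\<lambda>i. J (g i)"] by (simp add: A'_def mult_ac)
    ultimately show "P A" unfolding P_def eqA by simp
  qed
  then show ?thesis by (simp add: P_def)
qed

lemma J_abs: "bm f \<Longrightarrow> \<bar>J f\<bar> \<le> J (\<lambda>x. \<bar>f x\<bar>)"
proof -
  assume f: "bm f"
  have "\<bar>J f\<bar> \<le> (\<integral>x. \<bar>indicator {0..1} x * f x\<bar> \<partial>lborel)"
    unfolding J_def by (rule integral_abs_bound)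
  also have "(\<integral>x. \<bar>indicator {0..1} x * f x\<bar> \<partial>lborel) = (\<integral>x. indicator {0..1} (x::real) * \<bar>f x\<bar> \<partial>lborel)"
    by (intro Bochner_Integration.integral_cong) (auto simp: indicator_def)
  finally show ?thesis by (simp add: J_def)
qed

lemma bm_abs: "bm f \<Longrightarrow> bm (\<lambda>x. \<bar>f x\<bar>)"
  unfolding bm_def by auto

lemma bm_sum: "finite S \<Longrightarrow> (\<And>i. i \<in> S \<Longrightarrow> bm (f i)) \<Longrightarrow> bm (\<lambda>x. \<Sum>i\<in>S. f i x)"
proof (induction S rule: finite_induct)
  case empty then show ?case by (simp add: bm_const)
next
  case (insert j S)
  have "bm (\<lambda>x. f j x + (\<Sum>i\<in>S. f i x))"
  proof -
    have "bm (\<lambda>x. f j x - (- (\<Sum>i\<in>S. f i x)))"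
      using insert by (intro bm_diff) (auto simp: bm_def)
    then show ?thesis by simp
  qed
  then show ?case using insert by simp
qed

lemma bm_add: "bm f \<Longrightarrow> bm g \<Longrightarrow> bm (\<lambda>x. f x + g x)"
proof -
  assume f: "bm f" and g: "bm g"
  then obtain B C where B: "\<And>x. \<bar>f x\<bar> \<le> B" and C: "\<And>x. \<bar>g x\<bar> \<le> C" by (auto simp: bm_def)
  have "\<And>x. \<bar>f x + g x\<bar> \<le> B + C"
    using B C by (meson abs_triangle_ineq add_mono order_trans)
  then show ?thesis using f g by (auto simp: bm_def)
qed

lemma J_sum: "finite S \<Longrightarrow> (\<And>i. i \<in> S \<Longrightarrow> bm (f i)) \<Longrightarrow> J (\<lambda>x. \<Sum>i\<in>S. f i x) = (\<Sum>i\<in>S. J (f i))"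
proof (induction S rule: finite_induct)
  case empty then show ?case by (simp add: J_const)
next
  case (insert j S)
  have "J (\<lambda>x. \<Sum>i\<in>insert j S. f i x) = J (\<lambda>x. f j x + (\<Sum>i\<in>S. f i x))" using insert by simp
  also have "\<dots> = J (f j) + J (\<lambda>x. \<Sum>i\<in>S. f i x)"
    using insert by (intro J_add bm_sum) auto
  finally show ?case using insert by simp
qed

lemma meas_small:
  assumes "X \<in> sets borel" "emeasure lborel X < ennreal c"
  shows "J (indicator X) \<le> c"
proof -
  have fm: "X \<in> fmeasurable lborel" using assms by (auto simp: fmeasurable_def less_le_trans)
  have "J (indicator X) = measure lborel (X \<inter> {0..1})" using J_indicator[OF assms(1)] .
  also have "\<dots> \<le> measure lborel X" using fm assms(1) by (intro measure_mono_fmeasurable) auto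
  also have "measure lborel X < c"
  proof -
    have "emeasure lborel X \<noteq> top" using assms(2) by (metis ennreal_less_top top.not_eq_extremum order.strict_trans)
    then have "ennreal (measure lborel X) < ennreal c" using assms(2) emeasure_eq_ennreal_measure by metis
    then show ?thesis by (simp add: ennreal_less_iff)
  qed
  finally show ?thesis by simp
qed

lemma max_lip: "\<bar>max 0 (1 - p) - max 0 (1 - q)\<bar> \<le> \<bar>p - (q::real)\<bar>"
  by (cases "p \<le> 1"; cases "q \<le> 1") (auto simp: max_def abs_if)

lemma approx:
  fixes A :: "real set"
  assumes A: "A \<in> sets borel" "A \<subseteq> {0..1}" and e: "e > 0"
  shows "\<exists>g L. g \<in> borel_measurable borel \<and> (\<forall>x. \<bar>g x\<bar> \<le> 1) \<and> (\<forall>x y. \<bar>g x - g y\<bar> \<le> L * \<bar>x - y\<bar>) \<and> L \<ge> 0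
     \<and> J (\<lambda>x. \<bar>indicator A x - g x\<bar>) \<le> e"
proof -
  obtain U where U: "open U" "A \<subseteq> U" "emeasure lborel (U - A) < e / 2"
    using outer_regular_lborel[OF A(1), of "e/2"] e by auto
  have C: "{0..1} - A \<in> sets borel" using A by auto
  obtain V where V: "open V" "{0..1} - A \<subseteq> V" "emeasure lborel (V - ({0..1} - A)) < e / 2"
    using outer_regular_lborel[OF C, of "e/2"] e by auto
  define K where "K = {0..1} \<inter> - V"
  have Kc: "compact K" unfolding K_def using V(1)
    by (intro compact_Int_closed) auto
  have KA: "K \<subseteq> A" using V by (auto simp: K_def)
  have Ub: "U - A \<in> sets borel" "V - ({0..1} - A) \<in> sets borel"
    using U(1) V(1) A(1) by (auto intro!: sets.Diff borel_open)
  have m1: "J (indicator (U - A)) \<le> e / 2" by (rule meas_small[OF Ub(1) U(3)])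
  have m2: "J (indicator (V - ({0..1} - A))) \<le> e / 2" by (rule meas_small[OF Ub(2) V(3)])
  define d where "d = (if K = {} \<or> - U = {} then 1 else setdist K (- U))"
  have dpos: "d > 0"
  proof (cases "K = {} \<or> - U = {}")
    case True then show ?thesis by (simp add: d_def)
  next
    case False
    have "setdist K (- U) \<noteq> 0"
      using False KA U(1,2) setdist_eq_0_compact_closed[OF Kc, of "- U"] by auto
    moreover have "0 \<le> setdist K (- U)" by (rule setdist_pos_le)
    ultimately have "0 < setdist K (- U)" by linarith
    then show ?thesis using False by (simp add: d_def)
  qed
  have dle: "d \<le> infdist x K" if xU: "x \<notin> U" and Kne: "K \<noteq> {}" for x
  proof -
    obtain k where k: "k \<in> K" "infdist x K = dist x k"
      using infdist_attains_inf[of K x] Kc Kne compact_imp_closed by blast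
    have "-U \<noteq> {}" using xU by auto
    then have "d = setdist K (- U)" using Kne by (simp add: d_def)
    also have "\<dots> \<le> dist k x" using k xU by (intro setdist_le_dist) auto
    finally show ?thesis using k by (simp add: dist_commute)
  qed
  define g where "g = (\<lambda>x. if K = {} then 0 else max 0 (1 - infdist x K / d))"
  define L where "L = 1 / d"
  have g01: "0 \<le> g x" "g x \<le> 1" for x
    using dpos infdist_nonneg[of x K] by (auto simp: g_def)
  have gL: "\<bar>g x - g y\<bar> \<le> L * \<bar>x - y\<bar>" for x y
  proof (cases "K = {}")
    case True then show ?thesis using dpos by (simp add: g_def L_def)
  next
    case False
    have "\<bar>g x - g y\<bar> \<le> \<bar>infdist x K / d - infdist y K / d\<bar>"
      using False max_lip[of "infdist x K / d" "infdist y K / d"] by (simp add: g_def)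
    also have "\<bar>infdist x K / d - infdist y K / d\<bar> = \<bar>infdist x K - infdist y K\<bar> / d"
      using dpos by (simp add: diff_divide_distrib[symmetric])
    also have "\<bar>infdist x K - infdist y K\<bar> / d \<le> dist x y / d" using dpos infdist_triangle_abs[of x K y] by (simp add: divide_right_mono)
    finally show ?thesis by (simp add: L_def dist_real_def)
  qed
  have gc: "continuous_on UNIV g"
  proof (cases "K = {}")
    case True
    then have "g = (\<lambda>_. 0)" by (simp add: g_def fun_eq_iff)
    then show ?thesis by simp
  next
    case False
    then have "g = (\<lambda>x. max 0 (1 - infdist x K / d))" by (simp add: g_def fun_eq_iff)
    then show ?thesis using dpos by (simp add: continuous_intros)
  qed
  have gm: "g \<in> borel_measurable borel" using gc by (rule borel_measurable_continuous_onI)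
  have pt: "\<bar>indicator A x - g x\<bar> \<le> indicator (U - A) x + indicator (V - ({0..1} - A)) x"
    if x: "x \<in> {0..1}" for x
  proof (cases "x \<in> K")
    case True
    then have "g x = 1" "x \<in> A" using KA by (auto simp: g_def)
    then show ?thesis by (simp add: indicator_def)
  next
    case xK: False
    show ?thesis
    proof (cases "x \<in> U")
      case False
      then have "x \<notin> A" using U by auto
      moreover have "g x = 0"
      proof (cases "K = {}")
        case True then show ?thesis by (simp add: g_def)
      next
        case Kne: False
        have "1 - infdist x K / d \<le> 0" using dle[OF False Kne] dpos by (simp add: field_simps)
        then show ?thesis using Kne by (simp add: g_def)
      qed
      ultimately show ?thesis by (simp add: indicator_def)
    next
      case True
      have xV: "x \<in> V" using xK x by (auto simp: K_def)
      have "\<bar>indicator A x - g x\<bar> \<le> 1" using g01[of x] by (auto simp: indicator_def)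
      moreover have "(1::real) \<le> indicator (U - A) x + indicator (V - ({0..1} - A)) x"
        using True xV x by (auto simp: indicator_def)
      ultimately show ?thesis by simp
    qed
  qed
  have bmi: "bm (\<lambda>x. \<bar>indicator A x - g x\<bar>)"
    using A(1) gm g01 by (intro bm_abs bm_diff bm_indicator) (auto simp: bm_def intro!: exI[of _ 1])
  have "J (\<lambda>x. \<bar>indicator A x - g x\<bar>) \<le> J (\<lambda>x. indicator (U - A) x + indicator (V - ({0..1} - A)) x)"
    using pt by (intro J_mono bmi bm_add bm_indicator Ub) auto
  also have "\<dots> = J (indicator (U - A)) + J (indicator (V - ({0..1} - A)))"
    using Ub by (intro J_add bm_indicator) auto
  also have "\<dots> \<le> e" using m1 m2 by simp
  finally have "J (\<lambda>x. \<bar>indicator A x - g x\<bar>) \<le> e" .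
  moreover have "L \<ge> 0" using dpos by (simp add: L_def)
  moreover have "\<forall>x. \<bar>g x\<bar> \<le> 1" using g01 by (metis abs_of_nonneg)
  ultimately show ?thesis using gm gL by blast
qed

lemma approx_limit:
  fixes X :: "nat \<Rightarrow> real"
  assumes "\<And>e. e > 0 \<Longrightarrow> \<exists>Y c. Y \<longlonglongrightarrow> c \<and> (\<forall>n. \<bar>X n - Y n\<bar> \<le> e) \<and> \<bar>c - L\<bar> \<le> e"
  shows "X \<longlonglongrightarrow> L"
proof (rule tendstoI)
  fix r :: real assume r: "r > 0"
  obtain Y c where Y: "Y \<longlonglongrightarrow> c" "\<And>n. \<bar>X n - Y n\<bar> \<le> r / 4" "\<bar>c - L\<bar> \<le> r / 4"
    using assms[of "r/4"] r by auto
  have r4: "r / 4 > 0" using r by simp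
  have "\<forall>\<^sub>F n in sequentially. dist (Y n) c < r / 4" by (rule tendstoD[OF Y(1) r4])
  then show "\<forall>\<^sub>F n in sequentially. dist (X n) L < r"
  proof eventually_elim
    case (elim n)
    have "\<bar>X n - L\<bar> \<le> \<bar>X n - Y n\<bar> + \<bar>Y n - c\<bar> + \<bar>c - L\<bar>" by simp
    then show ?case using elim Y(2)[of n] Y(3) unfolding dist_real_def by linarith
  qed
qed

lemma prod_indicator_if:
  "finite S \<Longrightarrow> (\<Prod>i\<in>S. indicator (A i) (f i) :: real) = (if \<forall>i\<in>S. f i \<in> A i then 1 else 0)"
  by (induction S rule: finite_induct) (auto simp: indicator_def)

theorem mainTheorem18:
  fixes k :: nat and a :: "nat \<Rightarrow> real" and A :: "nat \<Rightarrow> real set"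
  assumes a_range: "\<And>i. i \<in> {1..k} \<Longrightarrow> 0 < a i \<and> a i < 1"
    and a_distinct: "\<And>i j. i \<in> {1..k} \<Longrightarrow> j \<in> {1..k} \<Longrightarrow> i \<noteq> j \<Longrightarrow> a i \<noteq> a j"
    and a_not_refl: "\<And>i j. i \<in> {1..k} \<Longrightarrow> j \<in> {1..k} \<Longrightarrow> i \<noteq> j \<Longrightarrow> a i \<noteq> 1 - a j"
    and A_borel: "\<And>i. i \<in> {0..k} \<Longrightarrow> A i \<in> sets borel"
    and A_sub: "\<And>i. i \<in> {0..k} \<Longrightarrow> A i \<subseteq> {0..1}"
  shows "(\<lambda>n. measure lborel (A 0 \<inter> (\<Inter>i\<in>{1..k}. Tpre (a i) n (A i))))
           \<longlonglongrightarrow> (\<Prod>i\<in>{0..k}. measure lborel (A i))"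
proof -
  define K1 where "K1 = {1..k}"
  have finK1: "finite K1" by (simp add: K1_def)
  have K0: "{0..k} = insert 0 K1" "0 \<notin> K1" by (auto simp: K1_def)
  have hinj: "\<And>i j. i \<in> K1 \<Longrightarrow> j \<in> K1 \<Longrightarrow> i \<noteq> j \<Longrightarrow> hh (a i) \<noteq> hh (a j)"
    unfolding K1_def using a_range a_distinct a_not_refl by (intro hh_inj) auto
  have aK: "\<And>i. i \<in> K1 \<Longrightarrow> 0 < a i \<and> a i < 1" using a_range by (simp add: K1_def)
  have Ab: "\<And>i. i \<in> K1 \<Longrightarrow> A i \<in> sets borel" "A 0 \<in> sets borel" using A_borel by (auto simp: K1_def)
  have bmA: "\<And>i. i \<in> {0..k} \<Longrightarrow> bm (indicator (A i))" using A_borel bm_indicator by blast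
  define f1 where "f1 = (\<lambda>n x. indicator (A 0) x * (\<Prod>i\<in>K1. indicator (A i) ((T (a i) ^^ n) x)) :: real)"
  have Xeq: "measure lborel (A 0 \<inter> (\<Inter>i\<in>{1..k}. Tpre (a i) n (A i))) = J (f1 n)" for n
  proof -
    define S where "S = A 0 \<inter> (\<Inter>i\<in>{1..k}. Tpre (a i) n (A i))"
    have "J (indicator S) = measure lborel (S \<inter> {0..1})"
      unfolding J_def by (simp add: indicator_inter_arith[symmetric] Int_commute)
    also have "S \<inter> {0..1} = S" using A_sub[of 0] by (auto simp: S_def)
    finally have "J (indicator S) = measure lborel S" .
    moreover have "J (indicator S) = J (f1 n)"
    proof (rule J_cong)
      fix x :: real assume x: "x \<in> {0..1}"
      have "x \<in> S \<longleftrightarrow> x \<in> A 0 \<and> (\<forall>i\<in>K1. (T (a i) ^^ n) x \<in> A i)"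
        using x by (auto simp: S_def K1_def Tpre_def)
      then show "indicator S x = f1 n x"
        using prod_indicator_if[OF finK1, of A "\<lambda>i. (T (a i) ^^ n) x"]
        by (auto simp: f1_def indicator_def)
    qed
    ultimately show ?thesis by (simp add: S_def)
  qed
  have Leq: "(\<Prod>i\<in>{0..k}. measure lborel (A i)) = (\<Prod>i\<in>{0..k}. J (indicator (A i)))"
  proof (rule prod.cong[OF refl])
    fix i assume i: "i \<in> {0..k}"
    have "J (indicator (A i)) = measure lborel (A i \<inter> {0..1})" using J_indicator[OF A_borel[OF i]] .
    also have "A i \<inter> {0..1} = A i" using A_sub[OF i] by auto
    finally show "measure lborel (A i) = J (indicator (A i))" by simp
  qed
  have "(\<lambda>n. J (f1 n)) \<longlonglongrightarrow> (\<Prod>i\<in>{0..k}. J (indicator (A i)))"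
  proof (rule approx_limit)
    fix e :: real assume e: "e > 0"
    define e' where "e' = e / (real k + 1)"
    have e': "e' > 0" using e by (simp add: e'_def)
    define Pp where "Pp = (\<lambda>i (g::real \<Rightarrow> real) L. g \<in> borel_measurable borel \<and> (\<forall>x. \<bar>g x\<bar> \<le> 1) \<and> (\<forall>x y. \<bar>g x - g y\<bar> \<le> L * \<bar>x - y\<bar>) \<and> L \<ge> 0
     \<and> J (\<lambda>x. \<bar>indicator (A i) x - g x\<bar>) \<le> e')"
    have ex: "\<exists>g L. Pp i g L" if i: "i \<in> {0..k}" for i
      unfolding Pp_def by (rule approx[OF A_borel[OF i] A_sub[OF i] e'])
    define gg where "gg = (\<lambda>i. SOME g. \<exists>L. Pp i g L)"
    define LL where "LL = (\<lambda>i. SOME L. Pp i (gg i) L)"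
    have ggP: "Pp i (gg i) (LL i)" if i: "i \<in> {0..k}" for i
    proof -
      have "\<exists>L. Pp i (gg i) L" unfolding gg_def by (rule someI_ex[OF ex[OF i]])
      then show ?thesis unfolding LL_def by (rule someI_ex)
    qed
    have gg: "gg i \<in> borel_measurable borel \<and> (\<forall>x. \<bar>gg i x\<bar> \<le> 1)
      \<and> (\<forall>x y. \<bar>gg i x - gg i y\<bar> \<le> LL i * \<bar>x - y\<bar>) \<and> LL i \<ge> 0
      \<and> J (\<lambda>x. \<bar>indicator (A i) x - gg i x\<bar>) \<le> e'" if i: "i \<in> {0..k}" for i
      using ggP[OF i] unfolding Pp_def by blast
    define Lm where "Lm = Max (LL ` {0..k})"
    have Lm: "\<And>i. i \<in> {0..k} \<Longrightarrow> LL i \<le> Lm" by (simp add: Lm_def)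
    have Lm0: "Lm \<ge> 0" using Lm[of 0] gg[of 0] by simp
    have ggL: "\<And>i x y. i \<in> {0..k} \<Longrightarrow> \<bar>gg i x - gg i y\<bar> \<le> Lm * \<bar>x - y\<bar>"
    proof -
      fix i x y assume i: "i \<in> {0..k}"
      have "\<bar>gg i x - gg i y\<bar> \<le> LL i * \<bar>x - y\<bar>" using gg[OF i] by blast
      also have "\<dots> \<le> Lm * \<bar>x - y\<bar>" using Lm[OF i] by (simp add: mult_right_mono)
      finally show "\<bar>gg i x - gg i y\<bar> \<le> Lm * \<bar>x - y\<bar>" .
    qed
    have K1sub: "\<And>i. i \<in> K1 \<Longrightarrow> i \<in> {0..k}" by (auto simp: K1_def)
    define Y where "Y = (\<lambda>n. J (\<lambda>x. gg 0 x * (\<Prod>i\<in>K1. gg i ((T (a i) ^^ n) x))))"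
    define c where "c = J (gg 0) * (\<Prod>i\<in>K1. J (gg i))"
    have Ylim: "Y \<longlonglongrightarrow> c"
      unfolding Y_def c_def
      by (rule main_lip[OF finK1 aK hinj, where L=Lm])
         (use gg ggL K1sub Lm0 in auto)
    have bmg: "\<And>i. i \<in> {0..k} \<Longrightarrow> bm (gg i)" using gg by (auto intro: bm_bounded1)
    define h where "h = (\<lambda>i x. \<bar>indicator (A i) x - gg i x\<bar>)"
    have bmh: "\<And>i. i \<in> {0..k} \<Longrightarrow> bm (h i)" unfolding h_def using bmA bmg by (intro bm_abs bm_diff)
    have Jh: "\<And>i. i \<in> {0..k} \<Longrightarrow> J (h i) \<le> e'" using gg by (simp add: h_def)
    have XY: "\<bar>J (f1 n) - Y n\<bar> \<le> e" for n
    proof -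
      define f2 where "f2 = (\<lambda>x. gg 0 x * (\<Prod>i\<in>K1. gg i ((T (a i) ^^ n) x)))"
      have bind: "\<And>i x. i \<in> K1 \<Longrightarrow> \<bar>indicator (A i) x :: real\<bar> \<le> 1" by (simp add: indicator_def)
      have bf1: "bm (f1 n)" unfolding f1_def
        using Ab by (intro bm_mult bm_indicator bm_prodT) (auto simp: indicator_def)
      have bf2: "bm f2" unfolding f2_def
        using gg K1sub by (intro bm_mult bmg bm_prodT) auto
      define H where "H = (\<lambda>x. h 0 x + (\<Sum>i\<in>K1. h i ((T (a i) ^^ n) x)))"
      have bH: "bm H" unfolding H_def
        using bmh K1sub finK1 by (intro bm_add bm_sum bm_comp_T) auto
      have pw: "\<bar>f1 n x - f2 x\<bar> \<le> H x" for x
      proof -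
        have "\<bar>f1 n x - f2 x\<bar> \<le> \<bar>(\<Prod>i\<in>K1. indicator (A i) ((T (a i) ^^ n) x)) - (\<Prod>i\<in>K1. gg i ((T (a i) ^^ n) x))\<bar>
              + \<bar>indicator (A 0) x - gg 0 x\<bar>"
          unfolding f1_def f2_def using gg K1sub
          by (intro mult_diff_le prod_abs_le1) (auto simp: indicator_def)
        also have "\<bar>(\<Prod>i\<in>K1. indicator (A i) ((T (a i) ^^ n) x)) - (\<Prod>i\<in>K1. gg i ((T (a i) ^^ n) x))\<bar>
              \<le> (\<Sum>i\<in>K1. h i ((T (a i) ^^ n) x))"
          unfolding h_def using finK1 gg K1sub by (intro prod_diff_le) (auto simp: indicator_def)
        finally show ?thesis by (simp add: H_def h_def add.commute)
      qed
      have eqd: "J (f1 n) - Y n = J (\<lambda>x. f1 n x - f2 x)" unfolding Y_def f2_def[symmetric]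
        using bf1 bf2 by (simp add: J_diff)
      have "\<bar>J (\<lambda>x. f1 n x - f2 x)\<bar> \<le> J (\<lambda>x. \<bar>f1 n x - f2 x\<bar>)" using bf1 bf2 by (intro J_abs bm_diff)
      also have "\<dots> \<le> J H" using pw bf1 bf2 bH by (intro J_mono bm_abs bm_diff) auto
      also have "J H = J (h 0) + (\<Sum>i\<in>K1. J (\<lambda>x. h i ((T (a i) ^^ n) x)))"
        unfolding H_def using bmh K1sub finK1
        by (simp add: J_add J_sum bm_sum bm_comp_T)
      also have "(\<Sum>i\<in>K1. J (\<lambda>x. h i ((T (a i) ^^ n) x))) = (\<Sum>i\<in>K1. J (h i))"
      proof (rule sum.cong[OF refl])
        fix i assume i: "i \<in> K1"
        show "J (\<lambda>x. h i ((T (a i) ^^ n) x)) = J (h i)"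
          using J_invariant[of "a i" "h i" n] aK[OF i] bmh[OF K1sub[OF i]] by (simp add: comp_def)
      qed
      also have "J (h 0) + (\<Sum>i\<in>K1. J (h i)) \<le> e' + (\<Sum>i\<in>K1. e')"
        using Jh K1sub by (intro add_mono sum_mono) auto
      also have "\<dots> = e"
      proof -
        have k1: "real k + 1 \<noteq> 0" by linarith
        have "e' + (\<Sum>i\<in>K1. e') = (real k + 1) * e'" by (simp add: K1_def algebra_simps)
        then show ?thesis using k1 by (simp add: e'_def)
      qed
      finally show ?thesis unfolding eqd .
    qed
    have cL: "\<bar>c - (\<Prod>i\<in>{0..k}. J (indicator (A i)))\<bar> \<le> e"
    proof -
      have "c = (\<Prod>i\<in>{0..k}. J (gg i))" unfolding c_def K0 using K0(2) finK1 by simp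
      then have "\<bar>c - (\<Prod>i\<in>{0..k}. J (indicator (A i)))\<bar> \<le> (\<Sum>i\<in>{0..k}. \<bar>J (gg i) - J (indicator (A i))\<bar>)"
        using bmg bmA gg by (auto intro!: prod_diff_le J_bm_bound simp: indicator_def)
      also have "\<dots> \<le> (\<Sum>i\<in>{0..k}. e')"
      proof (rule sum_mono)
        fix i assume i: "i \<in> {0..k}"
        have eq3: "\<bar>J (gg i) - J (indicator (A i))\<bar> = \<bar>J (\<lambda>x. indicator (A i) x - gg i x)\<bar>"
          using bmA[OF i] bmg[OF i] by (simp add: J_diff)
        have "\<bar>J (\<lambda>x. indicator (A i) x - gg i x)\<bar> \<le> J (h i)" unfolding h_def using bmA[OF i] bmg[OF i] by (intro J_abs bm_diff)
        then show "\<bar>J (gg i) - J (indicator (A i))\<bar> \<le> e'" using Jh[OF i] eq3 by simp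
      qed
      also have "\<dots> = e"
      proof -
        have k1: "real k + 1 \<noteq> 0" by linarith
        have "(\<Sum>i\<in>{0..k}. e') = (real k + 1) * e'" by (simp add: algebra_simps)
        then show ?thesis using k1 by (simp add: e'_def)
      qed
      finally show ?thesis .
    qed
    show "\<exists>Y c. Y \<longlonglongrightarrow> c \<and> (\<forall>n. \<bar>J (f1 n) - Y n\<bar> \<le> e) \<and> \<bar>c - (\<Prod>i\<in>{0..k}. J (indicator (A i)))\<bar> \<le> e"
      using Ylim XY cL by blast
  qed
  then show ?thesis using Xeq Leq by simp
qed

end
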